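(* Let $F$ and $G$ be one-dimensional formal groups over a commutative ring $R$. Then for every $n$ there is a natural isomorphism $T_1 H^n(F;G)\cong H^n(F;T_1G)$, where $T_1G\cong\hat{\mathbb{G}}_a$.
   Context: For an $R$-algebra $S$, the Lubin–Tate cochain group $A^n(F;G)(S)$ is the group (under the group law of $G$) of morphisms of formal schemes $F^{\times n}\to G$ over $S$ (in coordinates: power series in $n$ variables with zero constant term, composed with the formal group laws). These form a cochain complex with coboundary $\delta$ induced by the group law of $F$: $(\delta f)(x_0,\dots,x_n)=f(x_1,\dots,x_n)-_G f(x_0+_Fx_1,x_2,\dots)+_G\cdots\pm_G f(x_0,\dots,x_{n-1})$ (standard alternating sum of face maps, with $G$-operations). $H^n(F;G)(S)$ is the $n$-th cohomology of this complex. For a group-valued functor $X$ on $R$-algebras, the tangent space at the identity is $T_1X(S)=\ker\big(X(S[\epsilon]/\epsilon^2)\to X(S)\big)$ induced by $\epsilon\mapsto 0$. *)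

theory Defs
  imports "HOL-Algebra.Algebra"
begin

section \<open>Dual numbers S[eps]/(eps^2)\<close>

datatype 'a dual = Dual (dre: 'a) (deps: 'a)

instantiation dual :: (comm_ring_1) comm_ring_1
begin
definition zero_dual_def: "0 = Dual 0 0"
definition one_dual_def: "1 = Dual 1 0"
definition plus_dual_def: "x + y = Dual (dre x + dre y) (deps x + deps y)"
definition minus_dual_def: "x - y = Dual (dre x - dre y) (deps x - deps y)"
definition uminus_dual_def: "- x = Dual (- dre x) (- deps x)"
definition times_dual_def: "x * y = Dual (dre x * dre y) (dre x * deps y + deps x * dre y)"
instance
  by standard (auto simp: zero_dual_def one_dual_def plus_dual_def minus_dual_def
      uminus_dual_def times_dual_def dual.expand algebra_simps)
end

definition dual_map :: "('a \<Rightarrow> 'b) \<Rightarrow> 'a dual \<Rightarrow> 'b dual" where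
  "dual_map \<psi> x = Dual (\<psi> (dre x)) (\<psi> (deps x))"

definition is_ring_hom :: "('a::comm_ring_1 \<Rightarrow> 'b::comm_ring_1) \<Rightarrow> bool" where
  "is_ring_hom \<phi> \<longleftrightarrow> \<phi> 1 = 1 \<and> (\<forall>x y. \<phi> (x + y) = \<phi> x + \<phi> y) \<and> (\<forall>x y. \<phi> (x * y) = \<phi> x * \<phi> y)"

text \<open>A power series in k variables is its coefficient function on exponent vectors,
  represented as lists of length k; coefficients at lists of other lengths vanish.\<close>

type_synonym 'a mps = "nat list \<Rightarrow> 'a"

definition mps :: "nat \<Rightarrow> ('a::zero) mps set" where
  "mps k = {f. \<forall>e. length e \<noteq> k \<longrightarrow> f e = 0}"

definition mps_zero :: "('a::zero) mps" where
  "mps_zero = (\<lambda>e. 0)"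

definition mps_one :: "nat \<Rightarrow> ('a::{zero,one}) mps" where
  "mps_one k = (\<lambda>e. if e = replicate k 0 then 1 else 0)"

definition mps_var :: "nat \<Rightarrow> nat \<Rightarrow> ('a::{zero,one}) mps" where
  "mps_var k i = (\<lambda>e. if e = (replicate k 0)[i := 1] then 1 else 0)"

definition mps_add :: "('a::plus) mps \<Rightarrow> 'a mps \<Rightarrow> 'a mps" where
  "mps_add f g = (\<lambda>e. f e + g e)"

definition divisors_exp :: "nat list \<Rightarrow> nat list set" where
  "divisors_exp e = {a. list_all2 (\<le>) a e}"

definition mps_mult :: "nat \<Rightarrow> ('a::comm_ring_1) mps \<Rightarrow> 'a mps \<Rightarrow> 'a mps" where
  "mps_mult k f g = (\<lambda>e. if length e = k
      then (\<Sum>a\<in>divisors_exp e. f a * g (map2 (-) e a)) else 0)"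

definition mps_pow :: "nat \<Rightarrow> ('a::comm_ring_1) mps \<Rightarrow> nat \<Rightarrow> 'a mps" where
  "mps_pow k f m = ((mps_mult k f) ^^ m) (mps_one k)"

definition mps_prod :: "nat \<Rightarrow> ('a::comm_ring_1) mps list \<Rightarrow> 'a mps" where
  "mps_prod k fs = foldr (mps_mult k) fs (mps_one k)"

text \<open>Composition f(g_1,...,g_n) of a series f in n = length gs variables with series
  g_i in k variables having zero constant term.  Only exponents d with |d| \<le> |e|
  can contribute to the coefficient at e.\<close>
definition mps_comp :: "nat \<Rightarrow> ('a::comm_ring_1) mps \<Rightarrow> 'a mps list \<Rightarrow> 'a mps" where
  "mps_comp k f gs = (\<lambda>e. if length e = k then
      (\<Sum>d\<in>{d. length d = length gs \<and> sum_list d \<le> sum_list e}.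
          f d * mps_prod k (map2 (mps_pow k) gs d) e) else 0)"

definition mps_map :: "('a \<Rightarrow> 'b) \<Rightarrow> 'a mps \<Rightarrow> 'b mps" where
  "mps_map \<psi> f = (\<lambda>e. \<psi> (f e))"

definition fgl :: "('a::comm_ring_1) mps \<Rightarrow> bool" where
  "fgl F \<longleftrightarrow> F \<in> mps 2 \<and>
     mps_comp 1 F [mps_var 1 0, mps_zero] = mps_var 1 0 \<and>
     mps_comp 1 F [mps_zero, mps_var 1 0] = mps_var 1 0 \<and>
     mps_comp 2 F [mps_var 2 1, mps_var 2 0] = F \<and>
     mps_comp 3 F [mps_comp 3 F [mps_var 3 0, mps_var 3 1], mps_var 3 2]
       = mps_comp 3 F [mps_var 3 0, mps_comp 3 F [mps_var 3 1, mps_var 3 2]]"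

definition Ga :: "('a::comm_ring_1) mps" where
  "Ga = mps_add (mps_var 2 0) (mps_var 2 1)"

definition fgl_inv :: "('a::comm_ring_1) mps \<Rightarrow> 'a mps" where
  "fgl_inv G = (SOME i. i \<in> mps 1 \<and> i [0] = 0 \<and> mps_comp 1 G [mps_var 1 0, i] = mps_zero)"

definition cochains :: "nat \<Rightarrow> ('a::comm_ring_1) mps set" where
  "cochains n = {f \<in> mps n. f (replicate n 0) = 0}"

definition cadd :: "('a::comm_ring_1) mps \<Rightarrow> nat \<Rightarrow> 'a mps \<Rightarrow> 'a mps \<Rightarrow> 'a mps" where
  "cadd G n f g = mps_comp n G [f, g]"

definition cneg :: "('a::comm_ring_1) mps \<Rightarrow> nat \<Rightarrow> 'a mps \<Rightarrow> 'a mps" where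
  "cneg G n f = mps_comp n (fgl_inv G) [f]"

definition cochain_group :: "('a::comm_ring_1) mps \<Rightarrow> nat \<Rightarrow> 'a mps monoid" where
  "cochain_group G n = \<lparr>carrier = cochains n, monoid.mult = cadd G n, one = mps_zero\<rparr>"

text \<open>The substitutions defining the face maps A^n \<rightarrow> A^(n+1), i = 0..n+1:
  d_0 f = f(x_1,...,x_n), d_i f = f(x_0,...,x_(i-1) +_F x_i,...,x_n) for 1 \<le> i \<le> n,
  d_(n+1) f = f(x_0,...,x_(n-1)).\<close>
definition face_subst :: "('a::comm_ring_1) mps \<Rightarrow> nat \<Rightarrow> nat \<Rightarrow> 'a mps list" where
  "face_subst F n i =
     (if i = 0 then map (\<lambda>j. mps_var (n+1) (j+1)) [0..<n]
      else if i \<le> n then map (\<lambda>j. if j < i - 1 then mps_var (n+1) j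
                                  else if j = i - 1 then mps_comp (n+1) F [mps_var (n+1) (i-1), mps_var (n+1) i]
                                  else mps_var (n+1) (j+1)) [0..<n]
      else map (\<lambda>j. mps_var (n+1) j) [0..<n])"

definition face :: "('a::comm_ring_1) mps \<Rightarrow> nat \<Rightarrow> nat \<Rightarrow> 'a mps \<Rightarrow> 'a mps" where
  "face F n i f = mps_comp (n+1) f (face_subst F n i)"

definition coboundary :: "('a::comm_ring_1) mps \<Rightarrow> 'a mps \<Rightarrow> nat \<Rightarrow> 'a mps \<Rightarrow> 'a mps" where
  "coboundary F G n f =
     foldl (\<lambda>acc i. cadd G (n+1) acc
              (if even i then face F n i f else cneg G (n+1) (face F n i f)))
           mps_zero [0..<n+2]"

definition cocycles :: "('a::comm_ring_1) mps \<Rightarrow> 'a mps \<Rightarrow> nat \<Rightarrow> 'a mps set" where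
  "cocycles F G n = {f \<in> cochains n. coboundary F G n f = mps_zero}"

definition coboundaries :: "('a::comm_ring_1) mps \<Rightarrow> 'a mps \<Rightarrow> nat \<Rightarrow> 'a mps set" where
  "coboundaries F G n =
     (if n = 0 then {mps_zero} else coboundary F G (n - 1) ` cochains (n - 1))"

definition cocycle_group :: "('a::comm_ring_1) mps \<Rightarrow> 'a mps \<Rightarrow> nat \<Rightarrow> 'a mps monoid" where
  "cocycle_group F G n = (cochain_group G n)\<lparr>carrier := cocycles F G n\<rparr>"

definition cohom :: "('a::comm_ring_1) mps \<Rightarrow> 'a mps \<Rightarrow> nat \<Rightarrow> 'a mps set monoid" where
  "cohom F G n = cocycle_group F G n Mod coboundaries F G n"

definition cohom_class :: "('a::comm_ring_1) mps \<Rightarrow> 'a mps \<Rightarrow> nat \<Rightarrow> 'a mps \<Rightarrow> 'a mps set" where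
  "cohom_class F G n f = coboundaries F G n #>\<^bsub>cocycle_group F G n\<^esub> f"

definition cohom_map :: "('a \<Rightarrow> 'b) \<Rightarrow> ('b::comm_ring_1) mps \<Rightarrow> 'b mps \<Rightarrow> nat
     \<Rightarrow> ('a::comm_ring_1) mps set \<Rightarrow> 'b mps set" where
  "cohom_map \<psi> F' G' n C = cohom_class F' G' n (mps_map \<psi> (SOME f. f \<in> C))"

definition dual_base :: "('r \<Rightarrow> 's::comm_ring_1) \<Rightarrow> 'r \<Rightarrow> 's dual" where
  "dual_base \<phi> r = Dual (\<phi> r) 0"

definition cohomR :: "('r \<Rightarrow> 's::comm_ring_1) \<Rightarrow> 'r mps \<Rightarrow> 'r mps \<Rightarrow> nat \<Rightarrow> 's mps set monoid" where
  "cohomR \<phi> F G n = cohom (mps_map \<phi> F) (mps_map \<phi> G) n"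

text \<open>T_1 H^n(F;G)(S) = ker(H^n(F;G)(S[eps]) \<rightarrow> H^n(F;G)(S)), induced by eps \<mapsto> 0.\<close>
definition tangent_cohom :: "('r \<Rightarrow> 's::comm_ring_1) \<Rightarrow> 'r mps \<Rightarrow> 'r mps \<Rightarrow> nat \<Rightarrow> 's dual mps set monoid" where
  "tangent_cohom \<phi> F G n =
     (cohomR (dual_base \<phi>) F G n)\<lparr>carrier :=
        {C \<in> carrier (cohomR (dual_base \<phi>) F G n).
           cohom_map dre (mps_map \<phi> F) (mps_map \<phi> G) n C = \<one>\<^bsub>cohomR \<phi> F G n\<^esub>}\<rparr>"

definition cohom_Ga :: "('r \<Rightarrow> 's::comm_ring_1) \<Rightarrow> 'r mps \<Rightarrow> nat \<Rightarrow> 's mps set monoid" where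
  "cohom_Ga \<phi> F n = cohom (mps_map \<phi> F) Ga n"

definition tangent_comparison :: "('r \<Rightarrow> 's::comm_ring_1) \<Rightarrow> 'r mps \<Rightarrow> 'r mps \<Rightarrow> nat
     \<Rightarrow> 's mps set \<Rightarrow> 's dual mps set" where
  "tangent_comparison \<phi> F G n C =
     cohom_class (mps_map (dual_base \<phi>) F) (mps_map (dual_base \<phi>) G) n
        (mps_map (\<lambda>s. Dual 0 s) (SOME h. h \<in> C))"

end

theory Submission
  imports Defs
begin


section \<open>List exponent arithmetic\<close>

definition ladd :: "nat list \<Rightarrow> nat list \<Rightarrow> nat list" where
  "ladd a b = map2 (+) a b"

lemma length_ladd[simp]: "length (ladd a b) = min (length a) (length b)"
  by (simp add: ladd_def)

lemma ladd_comm: "ladd a b = ladd b a"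
proof (induction a arbitrary: b)
  case Nil then show ?case by (simp add: ladd_def)
next
  case (Cons x a) then show ?case by (cases b) (auto simp: ladd_def)
qed

lemma ladd_Cons[simp]: "ladd (x#a) (y#b) = (x+y) # ladd a b"
  by (simp add: ladd_def)
lemma ladd_Nil[simp]: "ladd [] b = []" "ladd a [] = []"
  by (auto simp: ladd_def)

lemma ladd_assoc: "ladd (ladd a b) c = ladd a (ladd b c)"
proof (induction a arbitrary: b c)
  case Nil then show ?case by simp
next
  case (Cons x a) then show ?case
    by (cases b; cases c) simp_all
qed

lemma sum_list_ladd: "length a = length b \<Longrightarrow> sum_list (ladd a b) = sum_list a + sum_list b"
proof (induction a arbitrary: b)
  case Nil then show ?case by simp
next
  case (Cons x a) then show ?case by (cases b) auto
qed

lemma ladd_zeros: "length a = n \<Longrightarrow> ladd (replicate n 0) a = a"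
proof (induction a arbitrary: n)
  case Nil then show ?case by simp
next
  case (Cons x a) then show ?case by (cases n) auto
qed

lemma ladd_sub: "list_all2 (\<le>) a e \<Longrightarrow> ladd a (map2 (-) e a) = e"
proof (induction a arbitrary: e)
  case Nil then show ?case by simp
next
  case (Cons x a) then show ?case by (cases e) (auto simp: ladd_def)
qed

lemma sub_ladd: "length a = length b \<Longrightarrow> map2 (-) (ladd a b) a = b"
proof (induction a arbitrary: b)
  case Nil then show ?case by simp
next
  case (Cons x a) then show ?case by (cases b) auto
qed

lemma le_ladd: "length a = length b \<Longrightarrow> list_all2 (\<le>) a (ladd a b)"
proof (induction a arbitrary: b)
  case Nil then show ?case by simp
next
  case (Cons x a) then show ?case by (cases b) auto
qed

lemma ladd_eq_zeros: "length a = n \<Longrightarrow> length b = n \<Longrightarrow> ladd a b = replicate n 0 \<longleftrightarrow> a = replicate n 0 \<and> b = replicate n 0"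
proof (induction a arbitrary: b n)
  case Nil then show ?case by simp
next
  case (Cons x a) then show ?case by (cases b; cases n) auto
qed

lemma ladd_cancel: "length a = length b \<Longrightarrow> length a = length c \<Longrightarrow> ladd a b = ladd a c \<Longrightarrow> b = c"
  by (metis sub_ladd)

lemma finite_len_sum: "finite {d::nat list. length d = m \<and> sum_list d \<le> N}"
proof -
  have "{d::nat list. length d = m \<and> sum_list d \<le> N} \<subseteq> {d. set d \<subseteq> {..N} \<and> length d = m}"
  proof (rule subsetI, rule CollectI, rule conjI)
    fix d :: "nat list" assume d: "d \<in> {d. length d = m \<and> sum_list d \<le> N}"
    show "set d \<subseteq> {..N}"
    proof
      fix x assume "x \<in> set d"
      then have "x \<le> sum_list d" using member_le_sum_list[of x d] by simp
      then show "x \<in> {..N}" using d by simp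
    qed
    show "length d = m" using d by simp
  qed
  moreover have "finite {d. set d \<subseteq> {..N::nat} \<and> length d = m}"
    by (rule finite_lists_length_eq) simp
  ultimately show ?thesis by (rule finite_subset)
qed

definition pairs :: "nat list \<Rightarrow> (nat list \<times> nat list) set" where
  "pairs e = {(a,b). length a = length e \<and> length b = length e \<and> ladd a b = e}"

lemma pairs_sub: "pairs e \<subseteq> {d. length d = length e \<and> sum_list d \<le> sum_list e} \<times> {d. length d = length e \<and> sum_list d \<le> sum_list e}"
proof
  fix p assume "p \<in> pairs e"
  then obtain a b where p: "p = (a,b)" "length a = length e" "length b = length e" "ladd a b = e"
    by (cases p) (auto simp: pairs_def)
  then have "sum_list e = sum_list a + sum_list b" using sum_list_ladd[of a b] by simp
  then show "p \<in> {d. length d = length e \<and> sum_list d \<le> sum_list e} \<times> {d. length d = length e \<and> sum_list d \<le> sum_list e}"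
    using p by simp
qed

lemma finite_pairs[simp]: "finite (pairs e)"
  by (rule finite_subset[OF pairs_sub]) (simp add: finite_len_sum)

lemma le_imp_sum: "list_all2 (\<le>) (a::nat list) e \<Longrightarrow> length a = length e \<and> sum_list a \<le> sum_list e"
proof (induction rule: list_all2_induct)
  case Nil then show ?case by simp
next
  case (Cons x xs y ys) then show ?case by (simp add: add_mono)
qed

lemma finite_divisors_exp[simp]: "finite (divisors_exp e)"
proof -
  have "divisors_exp e \<subseteq> {d. length d = length e \<and> sum_list d \<le> sum_list e}"
  proof
    fix a assume "a \<in> divisors_exp e"
    then have "list_all2 (\<le>) a e" by (simp add: divisors_exp_def)
    then show "a \<in> {d. length d = length e \<and> sum_list d \<le> sum_list e}"
      using le_imp_sum by auto
  qed
  then show ?thesis by (rule finite_subset) (simp add: finite_len_sum)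
qed

lemma mps_mult_pairs:
  assumes "length e = k"
  shows "mps_mult k f g e = (\<Sum>(a,b)\<in>pairs e. f a * g b)"
proof -
  have "mps_mult k f g e = (\<Sum>a\<in>divisors_exp e. f a * g (map2 (-) e a))"
    using assms by (simp add: mps_mult_def)
  also have "\<dots> = (\<Sum>(a,b)\<in>pairs e. f a * g b)"
  proof (rule sum.reindex_bij_witness[where i=fst and j="\<lambda>a. (a, map2 (-) e a)"])
    fix p assume p: "p \<in> pairs e"
    obtain a b where ab: "p = (a,b)" by (cases p)
    with p have l: "length a = length e" "length b = length e" "ladd a b = e" by (auto simp: pairs_def)
    show "(fst p, map2 (-) e (fst p)) = p" using l ab sub_ladd[of a b] by simp
    show "fst p \<in> divisors_exp e" using l ab le_ladd[of a b] by (simp add: divisors_exp_def)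
  next
    fix a assume a: "a \<in> divisors_exp e"
    then have le: "list_all2 (\<le>) a e" by (simp add: divisors_exp_def)
    then have la: "length a = length e" by (simp add: list_all2_lengthD)
    show "fst (a, map2 (-) e a) = a" by simp
    show "(a, map2 (-) e a) \<in> pairs e" using la ladd_sub[OF le] by (simp add: pairs_def)
    show "(case (a, map2 (-) e a) of (a, b) \<Rightarrow> f a * g b) = f a * g (map2 (-) e a)" by simp
  qed
  finally show ?thesis .
qed


section \<open>Ring laws for mps_mult\<close>

lemma mps_mult_out: "length e \<noteq> k \<Longrightarrow> mps_mult k f g e = 0"
  by (simp add: mps_mult_def)

lemma mps_mult_in_mps: "mps_mult k f g \<in> mps k"
  by (simp add: mps_def mps_mult_def)

lemma mps_mult_comm: "mps_mult k f g = mps_mult k g f"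
proof (rule ext)
  fix e show "mps_mult k f g e = mps_mult k g f e"
  proof (cases "length e = k")
    case True
    have "(\<Sum>(a,b)\<in>pairs e. f a * g b) = (\<Sum>(a,b)\<in>pairs e. g a * f b)"
    proof (rule sum.reindex_bij_witness[where i=prod.swap and j=prod.swap])
      fix p assume "p \<in> pairs e" then show "prod.swap p \<in> pairs e"
        by (cases p) (simp add: pairs_def ladd_comm)
    next
      fix p assume "p \<in> pairs e" then show "prod.swap p \<in> pairs e"
        by (cases p) (simp add: pairs_def ladd_comm)
    next
      fix p assume "p \<in> pairs e" then show "(case prod.swap p of (a, b) \<Rightarrow> g a * f b) = (case p of (a, b) \<Rightarrow> f a * g b)"
        by (cases p) (simp add: mult.commute)
    qed simp_all
    then show ?thesis using True by (simp add: mps_mult_pairs)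
  qed (simp add: mps_mult_def)
qed

definition triples :: "nat list \<Rightarrow> (nat list \<times> nat list \<times> nat list) set" where
  "triples e = {(a,b,c). length a = length e \<and> length b = length e \<and> length c = length e \<and> ladd (ladd a b) c = e}"

lemma finite_triples[simp]: "finite (triples e)"
proof -
  let ?B = "{d. length d = length e \<and> sum_list d \<le> sum_list e}"
  have "triples e \<subseteq> ?B \<times> ?B \<times> ?B"
  proof
    fix t assume "t \<in> triples e"
    then obtain a b c where t: "t = (a,b,c)" "length a = length e" "length b = length e"
      "length c = length e" "ladd (ladd a b) c = e" by (cases t) (auto simp: triples_def)
    then have "sum_list e = sum_list a + sum_list b + sum_list c"
      using sum_list_ladd[of "ladd a b" c] sum_list_ladd[of a b] by simp
    then show "t \<in> ?B \<times> ?B \<times> ?B" using t by simp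
  qed
  then show ?thesis by (rule finite_subset) (simp add: finite_len_sum)
qed

lemma nested_right:
  "(\<Sum>(a,x)\<in>pairs e. \<Sum>(b,c)\<in>pairs x. F a b c) = (\<Sum>(a,b,c)\<in>triples e. F a b c)"
proof -
  have "(\<Sum>(a,x)\<in>pairs e. \<Sum>(b,c)\<in>pairs x. F a b c)
      = (\<Sum>ax\<in>pairs e. \<Sum>bc\<in>pairs (snd ax). F (fst ax) (fst bc) (snd bc))"
    by (simp add: case_prod_beta)
  also have "\<dots> = (\<Sum>(ax,bc)\<in>(SIGMA ax:pairs e. pairs (snd ax)). F (fst ax) (fst bc) (snd bc))"
    by (rule sum.Sigma) simp_all
  also have "\<dots> = (\<Sum>(a,b,c)\<in>triples e. F a b c)"
  proof (rule sum.reindex_bij_witness[where i="\<lambda>(a,b,c). ((a, ladd b c), (b,c))" and j="\<lambda>((a,x),(b,c)). (a,b,c)"])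
    fix p assume p: "p \<in> (SIGMA ax:pairs e. pairs (snd ax))"
    obtain a x b c where pp: "p = ((a,x),(b,c))" by (cases p) auto
    with p have l: "length a = length e" "length x = length e" "ladd a x = e"
        "length b = length x" "length c = length x" "ladd b c = x"
      by (auto simp: pairs_def)
    show "(case case p of (x, xa) \<Rightarrow> (case x of (a, x) \<Rightarrow> \<lambda>(b, c). (a, b, c)) xa of (a, b, c) \<Rightarrow> ((a, ladd b c), b, c)) = p"
      using pp l by simp
    show "(case p of (x, xa) \<Rightarrow> (case x of (a, x) \<Rightarrow> \<lambda>(b, c). (a, b, c)) xa) \<in> triples e"
      using pp l by (simp add: triples_def ladd_assoc)
    show "(case case p of (x, xa) \<Rightarrow> (case x of (a, x) \<Rightarrow> \<lambda>(b, c). (a, b, c)) xa of (a, b, c) \<Rightarrow> F a b c) =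
         (case p of (ax, bc) \<Rightarrow> F (fst ax) (fst bc) (snd bc))"
      using pp by simp
  next
    fix t assume t: "t \<in> triples e"
    obtain a b c where tt: "t = (a,b,c)" by (cases t) auto
    with t have l: "length a = length e" "length b = length e" "length c = length e" "ladd (ladd a b) c = e"
      by (auto simp: triples_def)
    show "(case case t of (a, b, c) \<Rightarrow> ((a, ladd b c), b, c) of (x, xa) \<Rightarrow> (case x of (a, x) \<Rightarrow> \<lambda>(b, c). (a, b, c)) xa) = t"
      using tt by simp
    show "(case t of (a, b, c) \<Rightarrow> ((a, ladd b c), b, c)) \<in> (SIGMA ax:pairs e. pairs (snd ax))"
      using tt l by (simp add: pairs_def ladd_assoc)
  qed
  finally show ?thesis .
qed

lemma nested_left:
  "(\<Sum>(x,c)\<in>pairs e. \<Sum>(a,b)\<in>pairs x. F a b c) = (\<Sum>(a,b,c)\<in>triples e. F a b c)"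
proof -
  have "(\<Sum>(x,c)\<in>pairs e. \<Sum>(a,b)\<in>pairs x. F a b c)
      = (\<Sum>xc\<in>pairs e. \<Sum>ab\<in>pairs (fst xc). F (fst ab) (snd ab) (snd xc))"
    by (simp add: case_prod_beta)
  also have "\<dots> = (\<Sum>(xc,ab)\<in>(SIGMA xc:pairs e. pairs (fst xc)). F (fst ab) (snd ab) (snd xc))"
    by (rule sum.Sigma) simp_all
  also have "\<dots> = (\<Sum>(a,b,c)\<in>triples e. F a b c)"
  proof (rule sum.reindex_bij_witness[where i="\<lambda>(a,b,c). ((ladd a b, c), (a,b))" and j="\<lambda>((x,c),(a,b)). (a,b,c)"])
    fix p assume p: "p \<in> (SIGMA xc:pairs e. pairs (fst xc))"
    obtain a x b c where pp: "p = ((x,c),(a,b))" by (cases p) auto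
    with p have l: "length x = length e" "length c = length e" "ladd x c = e"
        "length a = length x" "length b = length x" "ladd a b = x"
      by (auto simp: pairs_def)
    show "(case case p of (x, xa) \<Rightarrow> (case x of (x, c) \<Rightarrow> \<lambda>(a, b). (a, b, c)) xa of (a, b, c) \<Rightarrow> ((ladd a b, c), a, b)) = p"
      using pp l by simp
    show "(case p of (x, xa) \<Rightarrow> (case x of (x, c) \<Rightarrow> \<lambda>(a, b). (a, b, c)) xa) \<in> triples e"
      using pp l by (simp add: triples_def)
    show "(case case p of (x, xa) \<Rightarrow> (case x of (x, c) \<Rightarrow> \<lambda>(a, b). (a, b, c)) xa of (a, b, c) \<Rightarrow> F a b c) =
         (case p of (xc, ab) \<Rightarrow> F (fst ab) (snd ab) (snd xc))"
      using pp by simp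
  next
    fix t assume t: "t \<in> triples e"
    obtain a b c where tt: "t = (a,b,c)" by (cases t) auto
    with t have l: "length a = length e" "length b = length e" "length c = length e" "ladd (ladd a b) c = e"
      by (auto simp: triples_def)
    show "(case case t of (a, b, c) \<Rightarrow> ((ladd a b, c), a, b) of (x, xa) \<Rightarrow> (case x of (x, c) \<Rightarrow> \<lambda>(a, b). (a, b, c)) xa) = t"
      using tt by simp
    show "(case t of (a, b, c) \<Rightarrow> ((ladd a b, c), a, b)) \<in> (SIGMA xc:pairs e. pairs (fst xc))"
      using tt l by (simp add: pairs_def)
  qed
  finally show ?thesis .
qed

lemma mps_mult_assoc: "mps_mult k (mps_mult k f g) h = mps_mult k f (mps_mult k g h)"
proof (rule ext)
  fix e show "mps_mult k (mps_mult k f g) h e = mps_mult k f (mps_mult k g h) e"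
  proof (cases "length e = k")
    case True
    have "mps_mult k (mps_mult k f g) h e = (\<Sum>(x,c)\<in>pairs e. mps_mult k f g x * h c)"
      using True by (simp add: mps_mult_pairs)
    also have "\<dots> = (\<Sum>(x,c)\<in>pairs e. (\<Sum>(a,b)\<in>pairs x. f a * g b) * h c)"
    proof (rule sum.cong[OF refl])
      fix p assume "p \<in> pairs e"
      then show "(case p of (x, c) \<Rightarrow> mps_mult k f g x * h c) = (case p of (x, c) \<Rightarrow> (\<Sum>(a, b)\<in>pairs x. f a * g b) * h c)"
        using True by (cases p) (simp add: pairs_def mps_mult_pairs)
    qed
    also have "\<dots> = (\<Sum>(x,c)\<in>pairs e. \<Sum>(a,b)\<in>pairs x. f a * g b * h c)"
      by (simp add: sum_distrib_right case_prod_beta)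
    also have "\<dots> = (\<Sum>(a,b,c)\<in>triples e. f a * g b * h c)" by (rule nested_left)
    also have "\<dots> = (\<Sum>(a,x)\<in>pairs e. \<Sum>(b,c)\<in>pairs x. f a * (g b * h c))"
      by (simp add: nested_right mult.assoc)
    also have "\<dots> = (\<Sum>(a,x)\<in>pairs e. f a * (\<Sum>(b,c)\<in>pairs x. g b * h c))"
      by (simp add: sum_distrib_left case_prod_beta)
    also have "\<dots> = (\<Sum>(a,x)\<in>pairs e. f a * mps_mult k g h x)"
    proof (rule sum.cong[OF refl])
      fix p assume "p \<in> pairs e"
      then show "(case p of (a, x) \<Rightarrow> f a * (\<Sum>(b, c)\<in>pairs x. g b * h c)) = (case p of (a, x) \<Rightarrow> f a * mps_mult k g h x)"
        using True by (cases p) (simp add: pairs_def mps_mult_pairs)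
    qed
    also have "\<dots> = mps_mult k f (mps_mult k g h) e"
      using True by (simp add: mps_mult_pairs)
    finally show ?thesis .
  qed (simp add: mps_mult_def)
qed

lemma mps_one_in[simp]: "mps_one k \<in> mps k"
  by (simp add: mps_def mps_one_def)

lemma mps_mult_one_right: assumes "f \<in> mps k" shows "mps_mult k f (mps_one k) = f"
proof (rule ext)
  fix e show "mps_mult k f (mps_one k) e = f e"
  proof (cases "length e = k")
    case True
    have "mps_mult k f (mps_one k) e = (\<Sum>a\<in>divisors_exp e. if a = e then f a else 0)"
    proof -
      have "\<And>a. a \<in> divisors_exp e \<Longrightarrow> f a * mps_one k (map2 (-) e a) = (if a = e then f a else 0)"
      proof -
        fix a assume "a \<in> divisors_exp e"
        then have le: "list_all2 (\<le>) a e" by (simp add: divisors_exp_def)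
        then have la: "length a = length e" by (simp add: list_all2_lengthD)
        have "map2 (-) e a = replicate k 0 \<longleftrightarrow> a = e"
        proof
          assume "map2 (-) e a = replicate k 0"
          then have "ladd a (replicate k 0) = e" using ladd_sub[OF le] by simp
          then show "a = e" using la True ladd_zeros[of a k] ladd_comm by metis
        next
          assume "a = e" then show "map2 (-) e a = replicate k 0" using True
            by (induction e arbitrary: k a) auto
        qed
        then show "f a * mps_one k (map2 (-) e a) = (if a = e then f a else 0)"
          by (simp add: mps_one_def)
      qed
      then show ?thesis using True by (simp add: mps_mult_def)
    qed
    also have "\<dots> = f e"
    proof -
      have "e \<in> divisors_exp e" by (simp add: divisors_exp_def list_all2_refl)
      then show ?thesis by (simp add: sum.delta[OF finite_divisors_exp])
    qed
    finally show ?thesis .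
  qed (use assms in \<open>simp add: mps_mult_def mps_def\<close>)
qed

lemma mps_mult_one_left: "f \<in> mps k \<Longrightarrow> mps_mult k (mps_one k) f = f"
  using mps_mult_comm mps_mult_one_right by metis

lemma mps_mult_add_right: "mps_mult k f (mps_add g h) = mps_add (mps_mult k f g) (mps_mult k f h)"
  by (rule ext) (simp add: mps_mult_def mps_add_def distrib_left sum.distrib)

lemma mps_mult_add_left: "mps_mult k (mps_add g h) f = mps_add (mps_mult k g f) (mps_mult k h f)"
  by (rule ext) (simp add: mps_mult_def mps_add_def distrib_right sum.distrib)


section \<open>Orders, powers, products\<close>

definition ord_ge :: "nat \<Rightarrow> ('a::zero) mps \<Rightarrow> bool" where
  "ord_ge p f \<longleftrightarrow> (\<forall>e. sum_list e < p \<longrightarrow> f e = 0)"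

lemma sum_list_zero_iff: "sum_list (e::nat list) = 0 \<longleftrightarrow> e = replicate (length e) 0"
  by (induction e) auto

lemma cochain_ord: assumes "f \<in> cochains k" shows "ord_ge 1 f"
  unfolding ord_ge_def
proof (intro allI impI)
  fix e :: "nat list" assume "sum_list e < 1"
  then have "e = replicate (length e) 0" using sum_list_zero_iff by simp
  then show "f e = 0" using assms by (cases "length e = k") (auto simp: cochains_def mps_def)
qed

lemma ord_ge_0[simp]: "ord_ge 0 f" by (simp add: ord_ge_def)

lemma ord_ge_mono: "ord_ge p f \<Longrightarrow> q \<le> p \<Longrightarrow> ord_ge q f"
  by (auto simp: ord_ge_def)

lemma mult_ord: assumes "ord_ge p f" "ord_ge q g" shows "ord_ge (p+q) (mps_mult k f g)"
  unfolding ord_ge_def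
proof (intro allI impI)
  fix e :: "nat list" assume e: "sum_list e < p + q"
  show "mps_mult k f g e = 0"
  proof (cases "length e = k")
    case True
    have "(\<Sum>(a,b)\<in>pairs e. f a * g b) = 0"
    proof (rule sum.neutral, rule ballI)
      fix x assume "x \<in> pairs e"
      then obtain a b where x: "x = (a,b)" "length a = length e" "length b = length e" "ladd a b = e"
        by (cases x) (auto simp: pairs_def)
      then have "sum_list a + sum_list b < p + q" using e sum_list_ladd[of a b] by simp
      then have "sum_list a < p \<or> sum_list b < q" by linarith
      then have "f a = 0 \<or> g b = 0" using assms unfolding ord_ge_def by blast
      then show "(case x of (a, b) \<Rightarrow> f a * g b) = 0" using x(1) by auto
    qed
    then show ?thesis using True by (simp add: mps_mult_pairs)
  qed (simp add: mps_mult_def)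
qed

lemma mps_pow_0[simp]: "mps_pow k f 0 = mps_one k" by (simp add: mps_pow_def)
lemma mps_pow_Suc: "mps_pow k f (Suc m) = mps_mult k f (mps_pow k f m)" by (simp add: mps_pow_def)

lemma mps_pow_in[simp]: "mps_pow k f m \<in> mps k"
  by (cases m) (simp_all add: mps_pow_Suc mps_mult_in_mps)

lemma pow_ord: "ord_ge 1 f \<Longrightarrow> ord_ge m (mps_pow k f m)"
proof (induction m)
  case 0 then show ?case by simp
next
  case (Suc m) then show ?case using mult_ord[of 1 f m "mps_pow k f m" k] by (simp add: mps_pow_Suc)
qed

lemma mps_pow_add: "mps_pow k f (m + n) = mps_mult k (mps_pow k f m) (mps_pow k f n)"
proof (induction m)
  case 0 then show ?case by (simp add: mps_mult_one_left)
next
  case (Suc m) then show ?case by (simp add: mps_pow_Suc mps_mult_assoc)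
qed

lemma mps_prod_Nil[simp]: "mps_prod k [] = mps_one k" by (simp add: mps_prod_def)
lemma mps_prod_Cons[simp]: "mps_prod k (f # fs) = mps_mult k f (mps_prod k fs)" by (simp add: mps_prod_def)
lemma mps_prod_in[simp]: "mps_prod k fs \<in> mps k"
  by (cases fs) (simp_all add: mps_mult_in_mps)

definition P :: "nat \<Rightarrow> ('a::comm_ring_1) mps list \<Rightarrow> nat list \<Rightarrow> 'a mps" where
  "P k gs d = mps_prod k (map2 (mps_pow k) gs d)"

lemma P_Nil[simp]: "P k [] d = mps_one k" "P k gs [] = mps_one k"
  by (simp_all add: P_def)
lemma P_Cons[simp]: "P k (g#gs) (x#d) = mps_mult k (mps_pow k g x) (P k gs d)"
  by (simp add: P_def)
lemma P_in[simp]: "P k gs d \<in> mps k" by (simp add: P_def)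

lemma P_ord: "length d = length gs \<Longrightarrow> \<forall>g\<in>set gs. ord_ge 1 g \<Longrightarrow> ord_ge (sum_list d) (P k gs d)"
proof (induction gs arbitrary: d)
  case Nil then show ?case by simp
next
  case (Cons g gs)
  then obtain x d' where d: "d = x # d'" "length d' = length gs" by (cases d) auto
  then show ?case using Cons mult_ord[of x "mps_pow k g x" "sum_list d'" "P k gs d'"] pow_ord[of g x k]
    by simp
qed

lemma P_zeros: "P k gs (replicate n 0) = mps_one k"
proof (induction gs arbitrary: n)
  case Nil then show ?case by simp
next
  case (Cons g gs) then show ?case by (cases n) (simp_all add: mps_mult_one_left)
qed

lemma mps_mult_swap4: "mps_mult k (mps_mult k a b) (mps_mult k c d) = mps_mult k (mps_mult k a c) (mps_mult k b d)"
proof -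
  have "mps_mult k (mps_mult k a b) (mps_mult k c d) = mps_mult k a (mps_mult k (mps_mult k b c) d)"
    by (simp only: mps_mult_assoc)
  also have "mps_mult k b c = mps_mult k c b" by (rule mps_mult_comm)
  also have "mps_mult k a (mps_mult k (mps_mult k c b) d) = mps_mult k (mps_mult k a c) (mps_mult k b d)"
    by (simp only: mps_mult_assoc)
  finally show ?thesis .
qed

lemma P_add: "length a = length gs \<Longrightarrow> length b = length gs \<Longrightarrow> P k gs (ladd a b) = mps_mult k (P k gs a) (P k gs b)"
proof (induction gs arbitrary: a b)
  case Nil then show ?case by (simp add: mps_mult_one_left)
next
  case (Cons g gs)
  then obtain x a' y b' where ab: "a = x # a'" "b = y # b'" "length a' = length gs" "length b' = length gs"
    by (cases a; cases b) auto
  then show ?case using Cons by (simp add: mps_pow_add) (rule mps_mult_swap4)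
qed

lemma P_unit: "i < length gs \<Longrightarrow> gs ! i \<in> mps k \<Longrightarrow> P k gs ((replicate (length gs) 0)[i := 1]) = gs ! i"
proof (induction gs arbitrary: i)
  case Nil then show ?case by simp
next
  case (Cons g gs)
  show ?case
  proof (cases i)
    case 0
    then have "P k (g # gs) ((replicate (length (g # gs)) 0)[i := 1]) = mps_mult k (mps_pow k g 1) (mps_one k)"
      by (simp add: P_zeros)
    also have "\<dots> = g" using Cons.prems 0 by (simp add: mps_mult_one_right mps_pow_Suc mps_mult_in_mps)
    finally show ?thesis using 0 by simp
  next
    case (Suc j)
    then show ?thesis using Cons by (simp add: mps_mult_one_left)
  qed
qed

section \<open>Composition: basic facts\<close>

definition Bset :: "nat \<Rightarrow> nat \<Rightarrow> nat list set" where
  "Bset m N = {d. length d = m \<and> sum_list d \<le> N}"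

lemma finite_Bset[simp]: "finite (Bset m N)"
  by (simp add: Bset_def finite_len_sum)

lemma mps_comp_P: "mps_comp k f gs = (\<lambda>e. if length e = k then (\<Sum>d\<in>Bset (length gs) (sum_list e). f d * P k gs d e) else 0)"
  unfolding mps_comp_def Bset_def P_def by (rule refl)

lemma comp_range:
  assumes "length e = k" "\<forall>g\<in>set gs. ord_ge 1 g" "sum_list e \<le> N"
  shows "mps_comp k f gs e = (\<Sum>d\<in>Bset (length gs) N. f d * P k gs d e)"
proof -
  have "mps_comp k f gs e = (\<Sum>d\<in>Bset (length gs) (sum_list e). f d * P k gs d e)"
    using assms by (simp add: mps_comp_P)
  also have "\<dots> = (\<Sum>d\<in>Bset (length gs) N. f d * P k gs d e)"
  proof (rule sum.mono_neutral_left)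
    show "Bset (length gs) (sum_list e) \<subseteq> Bset (length gs) N" using assms by (auto simp: Bset_def)
    show "\<forall>i\<in>Bset (length gs) N - Bset (length gs) (sum_list e). f i * P k gs i e = 0"
    proof
      fix d assume "d \<in> Bset (length gs) N - Bset (length gs) (sum_list e)"
      then have "length d = length gs" "sum_list e < sum_list d" by (auto simp: Bset_def)
      then have "P k gs d e = 0" using P_ord[of d gs k] assms(2) by (simp add: ord_ge_def)
      then show "f d * P k gs d e = 0" by simp
    qed
  qed simp
  finally show ?thesis .
qed

lemma comp_out: "length e \<noteq> k \<Longrightarrow> mps_comp k f gs e = 0"
  by (simp add: mps_comp_def)

lemma comp_in_mps[simp]: "mps_comp k f gs \<in> mps k"
  by (simp add: mps_def mps_comp_def)

lemma Bset_0: "Bset m 0 = {replicate m 0}"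
  by (auto simp: Bset_def sum_list_zero_iff replicate_length_same)

lemma mps_one_zeros[simp]: "mps_one k (replicate k 0) = 1"
  by (simp add: mps_one_def)

lemma comp_const:
  assumes "\<forall>g\<in>set gs. ord_ge 1 g"
  shows "mps_comp k f gs (replicate k 0) = f (replicate (length gs) 0)"
  using comp_range[of "replicate k 0" k gs 0 f] assms by (simp add: Bset_0 P_zeros)

lemma comp_cochain:
  assumes "\<forall>g\<in>set gs. ord_ge 1 g" "f (replicate (length gs) 0) = 0"
  shows "mps_comp k f gs \<in> cochains k"
  using comp_const[OF assms(1), of k f] assms(2) by (simp add: cochains_def)


section \<open>Multiplicativity of composition\<close>

lemma sum_pairs_Sigma:
  "(\<Sum>d\<in>Bset k N. \<Sum>(a,b)\<in>pairs d. F a b)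
   = (\<Sum>(a,b)\<in>{(a,b). length a = k \<and> length b = k \<and> sum_list a + sum_list b \<le> N}. F a b)"
proof -
  have "(\<Sum>d\<in>Bset k N. \<Sum>(a,b)\<in>pairs d. F a b) = (\<Sum>(d,ab)\<in>(SIGMA d:Bset k N. pairs d). (case ab of (a,b) \<Rightarrow> F a b))"
    by (rule sum.Sigma) simp_all
  also have "\<dots> = (\<Sum>(a,b)\<in>{(a,b). length a = k \<and> length b = k \<and> sum_list a + sum_list b \<le> N}. F a b)"
  proof (rule sum.reindex_bij_witness[where i="\<lambda>(a,b). (ladd a b, (a,b))" and j="\<lambda>(d,ab). ab"])
    fix p assume p: "p \<in> (SIGMA d:Bset k N. pairs d)"
    obtain d a b where pp: "p = (d,(a,b))" by (cases p) auto
    with p have l: "length d = k" "sum_list d \<le> N" "length a = length d" "length b = length d" "ladd a b = d"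
      by (auto simp: Bset_def pairs_def)
    show "(case case p of (d, ab) \<Rightarrow> ab of (a, b) \<Rightarrow> (ladd a b, a, b)) = p" using pp l by simp
    show "(case p of (d, ab) \<Rightarrow> ab) \<in> {(a, b). length a = k \<and> length b = k \<and> sum_list a + sum_list b \<le> N}"
      using pp l sum_list_ladd[of a b] by simp
    show "(case case p of (d, ab) \<Rightarrow> ab of (a, b) \<Rightarrow> F a b) = (case p of (d, ab) \<Rightarrow> case ab of (a, b) \<Rightarrow> F a b)"
      using pp by simp
  next
    fix q assume q: "q \<in> {(a, b). length a = k \<and> length b = k \<and> sum_list a + sum_list b \<le> N}"
    obtain a b where qq: "q = (a,b)" by (cases q) auto
    with q have l: "length a = k" "length b = k" "sum_list a + sum_list b \<le> N" by auto
    show "(case case q of (a, b) \<Rightarrow> (ladd a b, a, b) of (d, ab) \<Rightarrow> ab) = q" using qq by simp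
    show "(case q of (a, b) \<Rightarrow> (ladd a b, a, b)) \<in> (SIGMA d:Bset k N. pairs d)"
      using qq l sum_list_ladd[of a b] by (simp add: Bset_def pairs_def)
  qed
  finally show ?thesis .
qed

lemma comp_mult:
  assumes hs: "length hs = k" "\<forall>h\<in>set hs. ord_ge 1 h"
  shows "mps_comp j (mps_mult k f g) hs = mps_mult j (mps_comp j f hs) (mps_comp j g hs)"
proof (rule ext)
  fix e
  show "mps_comp j (mps_mult k f g) hs e = mps_mult j (mps_comp j f hs) (mps_comp j g hs) e"
  proof (cases "length e = j")
    case False then show ?thesis by (simp add: comp_out mps_mult_out)
  next
    case True
    define N where "N = sum_list e"
    define Q where "Q = P j hs"
    define PB where "PB = {(a,b). length a = k \<and> length b = k \<and> sum_list a + sum_list b \<le> N}"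
    let ?B = "Bset k N"
    have "mps_comp j (mps_mult k f g) hs e = (\<Sum>d\<in>?B. mps_mult k f g d * Q d e)"
      using comp_range[of e j hs N] True hs by (simp add: N_def Q_def)
    also have "\<dots> = (\<Sum>d\<in>?B. \<Sum>(a,b)\<in>pairs d. f a * g b * mps_mult j (Q a) (Q b) e)"
    proof (rule sum.cong[OF refl])
      fix d assume d: "d \<in> ?B"
      then have ld: "length d = k" by (simp add: Bset_def)
      have "mps_mult k f g d * Q d e = (\<Sum>(a,b)\<in>pairs d. f a * g b) * Q d e"
        using ld by (simp add: mps_mult_pairs)
      also have "\<dots> = (\<Sum>(a,b)\<in>pairs d. f a * g b * Q d e)"
        by (simp add: sum_distrib_right case_prod_beta)
      also have "\<dots> = (\<Sum>(a,b)\<in>pairs d. f a * g b * mps_mult j (Q a) (Q b) e)"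
      proof (rule sum.cong[OF refl])
        fix p assume "p \<in> pairs d"
        then obtain a b where p: "p = (a,b)" "length a = length d" "length b = length d" "ladd a b = d"
          by (cases p) (auto simp: pairs_def)
        then have "Q d = mps_mult j (Q a) (Q b)" using P_add[of a hs b j] ld hs by (simp add: Q_def)
        then show "(case p of (a, b) \<Rightarrow> f a * g b * Q d e) = (case p of (a, b) \<Rightarrow> f a * g b * mps_mult j (Q a) (Q b) e)"
          using p by simp
      qed
      finally show "mps_mult k f g d * Q d e = (\<Sum>(a,b)\<in>pairs d. f a * g b * mps_mult j (Q a) (Q b) e)" .
    qed
    also have "\<dots> = (\<Sum>(a,b)\<in>PB. f a * g b * mps_mult j (Q a) (Q b) e)"
      unfolding PB_def by (rule sum_pairs_Sigma)
    also have "\<dots> = (\<Sum>(a,b)\<in>?B \<times> ?B. f a * g b * mps_mult j (Q a) (Q b) e)"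
    proof (rule sum.mono_neutral_left)
      show "finite (?B \<times> ?B)" by simp
      show "PB \<subseteq> ?B \<times> ?B" by (auto simp: PB_def Bset_def)
      show "\<forall>i\<in>?B \<times> ?B - PB. (case i of (a, b) \<Rightarrow> f a * g b * mps_mult j (Q a) (Q b) e) = 0"
      proof
        fix x assume x: "x \<in> ?B \<times> ?B - PB"
        obtain a b where ab: "x = (a,b)" by (cases x) auto
        with x have l: "length a = k" "length b = k" "N < sum_list a + sum_list b"
          by (auto simp: PB_def Bset_def)
        have "ord_ge (sum_list a + sum_list b) (mps_mult j (Q a) (Q b))"
          using mult_ord[OF P_ord[of a hs j] P_ord[of b hs j], of j] l hs by (simp add: Q_def)
        then have "mps_mult j (Q a) (Q b) e = 0" using l by (simp add: ord_ge_def N_def)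
        then show "(case x of (a, b) \<Rightarrow> f a * g b * mps_mult j (Q a) (Q b) e) = 0" using ab by simp
      qed
    qed
    also have "\<dots> = (\<Sum>a\<in>?B. \<Sum>b\<in>?B. f a * g b * mps_mult j (Q a) (Q b) e)"
      by (rule sum.cartesian_product[symmetric])
    also have "\<dots> = (\<Sum>a\<in>?B. \<Sum>b\<in>?B. \<Sum>(e1,e2)\<in>pairs e. (f a * Q a e1) * (g b * Q b e2))"
      using True by (simp add: mps_mult_pairs sum_distrib_left case_prod_beta mult_ac)
    also have "\<dots> = (\<Sum>(e1,e2)\<in>pairs e. (\<Sum>a\<in>?B. f a * Q a e1) * (\<Sum>b\<in>?B. g b * Q b e2))"
      by (simp add: sum_product sum.swap[of _ _ "pairs e"] case_prod_beta)
    also have "\<dots> = (\<Sum>(e1,e2)\<in>pairs e. mps_comp j f hs e1 * mps_comp j g hs e2)"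
    proof (rule sum.cong[OF refl])
      fix p assume "p \<in> pairs e"
      then obtain e1 e2 where p: "p = (e1,e2)" "length e1 = j" "length e2 = j" "ladd e1 e2 = e"
        using True by (cases p) (auto simp: pairs_def)
      then have s: "sum_list e1 \<le> N" "sum_list e2 \<le> N" using sum_list_ladd[of e1 e2] by (auto simp: N_def)
      show "(case p of (e1, e2) \<Rightarrow> (\<Sum>a\<in>?B. f a * Q a e1) * (\<Sum>b\<in>?B. g b * Q b e2)) =
            (case p of (e1, e2) \<Rightarrow> mps_comp j f hs e1 * mps_comp j g hs e2)"
        using p s comp_range[of e1 j hs N f] comp_range[of e2 j hs N g] hs by (simp add: Q_def)
    qed
    also have "\<dots> = mps_mult j (mps_comp j f hs) (mps_comp j g hs) e"
      using True by (simp add: mps_mult_pairs)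
    finally show ?thesis .
  qed
qed


lemma mps_one_out: "length e \<noteq> k \<Longrightarrow> mps_one k e = 0"
  by (auto simp: mps_one_def)

lemma sum_list_zeros[simp]: "sum_list (replicate k (0::nat)) = 0"
  by (induction k) auto

lemma zeros_in_Bset[simp]: "replicate k 0 \<in> Bset k N"
  by (simp add: Bset_def)

lemma comp_one:
  assumes hs: "length hs = k" "\<forall>h\<in>set hs. ord_ge 1 h"
  shows "mps_comp j (mps_one k) hs = mps_one j"
proof (rule ext)
  fix e show "mps_comp j (mps_one k) hs e = mps_one j e"
  proof (cases "length e = j")
    case False then show ?thesis by (simp add: comp_out mps_one_out)
  next
    case True
    have "mps_comp j (mps_one k) hs e = (\<Sum>d\<in>Bset k (sum_list e). mps_one k d * P j hs d e)"
      using comp_range[of e j hs "sum_list e"] True hs by simp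
    also have "\<dots> = (\<Sum>d\<in>Bset k (sum_list e). if d = replicate k 0 then P j hs d e else 0)"
      by (rule sum.cong[OF refl]) (simp add: mps_one_def)
    also have "\<dots> = P j hs (replicate k 0) e" by simp
    also have "\<dots> = mps_one j e" by (simp add: P_zeros)
    finally show ?thesis .
  qed
qed

lemma comp_cochain_ord:
  assumes "\<forall>h\<in>set hs. ord_ge 1 h" "ord_ge 1 g"
  shows "ord_ge 1 (mps_comp j g hs)"
proof -
  have "g (replicate (length hs) 0) = 0" using assms(2) by (simp add: ord_ge_def)
  then show ?thesis using comp_cochain[OF assms(1)] cochain_ord by blast
qed

lemma comp_pow:
  assumes hs: "length hs = k" "\<forall>h\<in>set hs. ord_ge 1 h"
  shows "mps_comp j (mps_pow k g n) hs = mps_pow j (mps_comp j g hs) n"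
proof (induction n)
  case 0 then show ?case using comp_one[OF hs] by simp
next
  case (Suc n) then show ?case using comp_mult[OF hs] by (simp add: mps_pow_Suc)
qed

lemma comp_P:
  assumes hs: "length hs = k" "\<forall>h\<in>set hs. ord_ge 1 h"
  shows "length c = length gs \<Longrightarrow> mps_comp j (P k gs c) hs = P j (map (\<lambda>g. mps_comp j g hs) gs) c"
proof (induction gs arbitrary: c)
  case Nil then show ?case using comp_one[OF hs] by simp
next
  case (Cons g gs)
  then obtain x c' where c: "c = x # c'" "length c' = length gs" by (cases c) auto
  then show ?case using Cons comp_mult[OF hs] comp_pow[OF hs] by simp
qed

lemma comp_assoc:
  assumes hs: "length hs = k" "\<forall>h\<in>set hs. ord_ge 1 h" and gs: "\<forall>g\<in>set gs. ord_ge 1 g"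
  shows "mps_comp j (mps_comp k f gs) hs = mps_comp j f (map (\<lambda>g. mps_comp j g hs) gs)"
proof (rule ext)
  fix e show "mps_comp j (mps_comp k f gs) hs e = mps_comp j f (map (\<lambda>g. mps_comp j g hs) gs) e"
  proof (cases "length e = j")
    case False then show ?thesis by (simp add: comp_out)
  next
    case True
    define N where "N = sum_list e"
    let ?gs' = "map (\<lambda>g. mps_comp j g hs) gs"
    have gs': "\<forall>g\<in>set ?gs'. ord_ge 1 g" using gs comp_cochain_ord[OF hs(2)] by auto
    have "mps_comp j (mps_comp k f gs) hs e = (\<Sum>d\<in>Bset k N. mps_comp k f gs d * P j hs d e)"
      using comp_range[of e j hs N] True hs by (simp add: N_def)
    also have "\<dots> = (\<Sum>d\<in>Bset k N. (\<Sum>c\<in>Bset (length gs) N. f c * P k gs c d) * P j hs d e)"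
    proof (rule sum.cong[OF refl])
      fix d assume "d \<in> Bset k N"
      then have "length d = k" "sum_list d \<le> N" by (auto simp: Bset_def)
      then show "mps_comp k f gs d * P j hs d e = (\<Sum>c\<in>Bset (length gs) N. f c * P k gs c d) * P j hs d e"
        using comp_range[of d k gs N f] gs by simp
    qed
    also have "\<dots> = (\<Sum>c\<in>Bset (length gs) N. f c * (\<Sum>d\<in>Bset k N. P k gs c d * P j hs d e))"
      by (simp add: sum_distrib_left sum_distrib_right sum.swap[of _ "Bset k N"] mult.assoc)
    also have "\<dots> = (\<Sum>c\<in>Bset (length gs) N. f c * mps_comp j (P k gs c) hs e)"
    proof (rule sum.cong[OF refl])
      fix c assume "c \<in> Bset (length gs) N"
      show "f c * (\<Sum>d\<in>Bset k N. P k gs c d * P j hs d e) = f c * mps_comp j (P k gs c) hs e"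
        using comp_range[of e j hs N "P k gs c"] True hs by (simp add: N_def)
    qed
    also have "\<dots> = (\<Sum>c\<in>Bset (length gs) N. f c * P j ?gs' c e)"
    proof (rule sum.cong[OF refl])
      fix c assume "c \<in> Bset (length gs) N"
      then have "length c = length gs" by (simp add: Bset_def)
      then show "f c * mps_comp j (P k gs c) hs e = f c * P j ?gs' c e"
        using comp_P[OF hs] by simp
    qed
    also have "\<dots> = mps_comp j f ?gs' e"
      using comp_range[of e j ?gs' N f] True gs' by (simp add: N_def)
    finally show ?thesis .
  qed
qed

lemma sum_list_unit: "i < k \<Longrightarrow> sum_list ((replicate k (0::nat))[i := 1]) = 1"
proof (induction k arbitrary: i)
  case 0 then show ?case by simp
next
  case (Suc k) then show ?case by (cases i) (simp_all add: sum_list_zero_iff)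
qed

lemma comp_var:
  assumes hs: "length hs = k" "\<forall>h\<in>set hs. ord_ge 1 h" and i: "i < k" and hi: "hs ! i \<in> mps j"
  shows "mps_comp j (mps_var k i) hs = hs ! i"
proof (rule ext)
  fix e show "mps_comp j (mps_var k i) hs e = (hs ! i) e"
  proof (cases "length e = j")
    case False then show ?thesis using hi by (simp add: comp_out mps_def)
  next
    case True
    let ?u = "(replicate k 0)[i := 1]"
    have u: "?u \<in> Bset k (sum_list e + 1)" using i sum_list_unit[of i k] by (simp add: Bset_def)
    have "mps_comp j (mps_var k i) hs e = (\<Sum>d\<in>Bset k (sum_list e + 1). mps_var k i d * P j hs d e)"
      using comp_range[of e j hs "sum_list e + 1"] True hs by simp
    also have "\<dots> = (\<Sum>d\<in>Bset k (sum_list e + 1). if d = ?u then P j hs d e else 0)"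
      by (rule sum.cong[OF refl]) (simp add: mps_var_def)
    also have "\<dots> = P j hs ?u e" using u by simp
    also have "\<dots> = (hs ! i) e" using P_unit[of i hs j] hs i hi by simp
    finally show ?thesis .
  qed
qed

lemma mps_zero_in[simp]: "mps_zero \<in> mps k" by (simp add: mps_def mps_zero_def)

lemma ord_zero[simp]: "ord_ge p mps_zero" by (simp add: ord_ge_def mps_zero_def)

lemma comp_zero_left[simp]: "mps_comp j mps_zero hs = mps_zero"
  by (rule ext) (simp add: mps_comp_def mps_zero_def)

lemma comp_add_left: "mps_comp j (mps_add f g) hs = mps_add (mps_comp j f hs) (mps_comp j g hs)"
  by (rule ext) (simp add: mps_comp_def mps_add_def distrib_right sum.distrib)


section \<open>Base change along ring homomorphisms\<close>

lemma hom_0: "is_ring_hom \<psi> \<Longrightarrow> \<psi> 0 = 0"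
  by (metis add_cancel_right_right is_ring_hom_def)

lemma hom_add: "is_ring_hom \<psi> \<Longrightarrow> \<psi> (x + y) = \<psi> x + \<psi> y"
  by (simp add: is_ring_hom_def)

lemma hom_mult: "is_ring_hom \<psi> \<Longrightarrow> \<psi> (x * y) = \<psi> x * \<psi> y"
  by (simp add: is_ring_hom_def)

lemma hom_1: "is_ring_hom \<psi> \<Longrightarrow> \<psi> 1 = 1"
  by (simp add: is_ring_hom_def)

lemma hom_neg: "is_ring_hom \<psi> \<Longrightarrow> \<psi> (- x) = - \<psi> x"
  by (metis add.inverse_unique add.right_inverse hom_0 hom_add)

lemma hom_sum: "is_ring_hom \<psi> \<Longrightarrow> \<psi> (sum F A) = (\<Sum>a\<in>A. \<psi> (F a))"
proof (induction A rule: infinite_finite_induct)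
  case (infinite A) then show ?case by (simp add: hom_0)
next
  case empty then show ?case by (simp add: hom_0)
next
  case (insert x F) then show ?case by (simp add: hom_add)
qed

lemma map_mult: "is_ring_hom \<psi> \<Longrightarrow> mps_map \<psi> (mps_mult k f g) = mps_mult k (mps_map \<psi> f) (mps_map \<psi> g)"
  by (rule ext) (simp add: mps_map_def mps_mult_def hom_sum hom_mult hom_0)

lemma map_one: "is_ring_hom \<psi> \<Longrightarrow> mps_map \<psi> (mps_one k) = mps_one k"
  by (rule ext) (simp add: mps_map_def mps_one_def hom_0 hom_1)

lemma map_var: "is_ring_hom \<psi> \<Longrightarrow> mps_map \<psi> (mps_var k i) = mps_var k i"
  by (rule ext) (simp add: mps_map_def mps_var_def hom_0 hom_1)

lemma map_zero: "is_ring_hom \<psi> \<Longrightarrow> mps_map \<psi> mps_zero = mps_zero"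
  by (rule ext) (simp add: mps_map_def mps_zero_def hom_0)

lemma map_add: "is_ring_hom \<psi> \<Longrightarrow> mps_map \<psi> (mps_add f g) = mps_add (mps_map \<psi> f) (mps_map \<psi> g)"
  by (rule ext) (simp add: mps_map_def mps_add_def hom_add)

lemma map_pow: "is_ring_hom \<psi> \<Longrightarrow> mps_map \<psi> (mps_pow k f n) = mps_pow k (mps_map \<psi> f) n"
  by (induction n) (simp_all add: map_one mps_pow_Suc map_mult)

lemma map_P: "is_ring_hom \<psi> \<Longrightarrow> mps_map \<psi> (P k gs d) = P k (map (mps_map \<psi>) gs) d"
proof (induction gs arbitrary: d)
  case Nil then show ?case by (simp add: map_one)
next
  case (Cons g gs) then show ?case by (cases d) (simp_all add: map_one map_mult map_pow)
qed

lemma map_comp: "is_ring_hom \<psi> \<Longrightarrow> mps_map \<psi> (mps_comp k f gs) = mps_comp k (mps_map \<psi> f) (map (mps_map \<psi>) gs)"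
proof (rule ext)
  fix e assume h: "is_ring_hom \<psi>"
  have "\<psi> (P k gs d e) = P k (map (mps_map \<psi>) gs) d e" for d
    using map_P[OF h, of k gs d] by (metis mps_map_def)
  then show "mps_map \<psi> (mps_comp k f gs) e = mps_comp k (mps_map \<psi> f) (map (mps_map \<psi>) gs) e"
    using h by (simp add: mps_comp_P mps_map_def hom_sum hom_mult hom_0)
qed

lemma map_mps: "is_ring_hom \<psi> \<Longrightarrow> f \<in> mps k \<Longrightarrow> mps_map \<psi> f \<in> mps k"
  by (simp add: mps_def mps_map_def hom_0)

lemma map_cochains: "is_ring_hom \<psi> \<Longrightarrow> f \<in> cochains k \<Longrightarrow> mps_map \<psi> f \<in> cochains k"
  by (simp add: cochains_def mps_def mps_map_def hom_0)

lemma map_ord: "is_ring_hom \<psi> \<Longrightarrow> ord_ge p f \<Longrightarrow> ord_ge p (mps_map \<psi> f)"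
  by (simp add: ord_ge_def mps_map_def hom_0)

lemma map_map: "mps_map \<psi> (mps_map \<phi> f) = mps_map (\<psi> \<circ> \<phi>) f"
  by (simp add: mps_map_def comp_def)

lemma fgl_map: assumes h: "is_ring_hom \<psi>" and F: "fgl F" shows "fgl (mps_map \<psi> F)"
proof -
  have "mps_map \<psi> F \<in> mps 2" using F h map_mps by (auto simp: fgl_def)
  moreover have "mps_comp 1 (mps_map \<psi> F) [mps_var 1 0, mps_zero] = mps_var 1 0"
    using arg_cong[where f="mps_map \<psi>", OF conjunct1[OF conjunct2[OF F[unfolded fgl_def]]]]
    by (simp add: map_comp[OF h] map_var[OF h] map_zero[OF h])
  moreover have "mps_comp 1 (mps_map \<psi> F) [mps_zero, mps_var 1 0] = mps_var 1 0"
    using arg_cong[where f="mps_map \<psi>", OF conjunct1[OF conjunct2[OF conjunct2[OF F[unfolded fgl_def]]]]]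
    by (simp add: map_comp[OF h] map_var[OF h] map_zero[OF h])
  moreover have "mps_comp 2 (mps_map \<psi> F) [mps_var 2 1, mps_var 2 0] = mps_map \<psi> F"
    using arg_cong[where f="mps_map \<psi>", OF conjunct1[OF conjunct2[OF conjunct2[OF conjunct2[OF F[unfolded fgl_def]]]]]]
    by (simp add: map_comp[OF h] map_var[OF h])
  moreover have "mps_comp 3 (mps_map \<psi> F) [mps_comp 3 (mps_map \<psi> F) [mps_var 3 0, mps_var 3 1], mps_var 3 2]
       = mps_comp 3 (mps_map \<psi> F) [mps_var 3 0, mps_comp 3 (mps_map \<psi> F) [mps_var 3 1, mps_var 3 2]]"
    using arg_cong[where f="mps_map \<psi>", OF conjunct2[OF conjunct2[OF conjunct2[OF conjunct2[OF F[unfolded fgl_def]]]]]]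
    by (simp add: map_comp[OF h] map_var[OF h])
  ultimately show ?thesis by (simp add: fgl_def)
qed


section \<open>Formal group laws: the cochain group\<close>

declare One_nat_def [simp del]

lemma var_in_mps[simp]: "mps_var k i \<in> mps k"
  by (simp add: mps_def mps_var_def)

lemma unit_ne_zeros: "i < k \<Longrightarrow> (replicate k (0::nat))[i := 1] \<noteq> replicate k 0"
proof
  assume i: "i < k" and eq: "(replicate k (0::nat))[i := 1] = replicate k 0"
  have "(replicate k (0::nat))[i := 1] ! i = replicate k 0 ! i" using eq by simp
  then show False using i by simp
qed

lemma var_cochain: assumes i: "i < k" shows "mps_var k i \<in> cochains k"
proof -
  have ne: "replicate k (0::nat) \<noteq> (replicate k 0)[i := 1]" using unit_ne_zeros[OF i] by (rule not_sym)
  have "mps_var k i (replicate k 0) = 0" unfolding mps_var_def using ne by (simp only: if_False)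
  then show ?thesis by (simp add: cochains_def)
qed

lemma var_ord: "i < k \<Longrightarrow> ord_ge 1 (mps_var k i :: ('a::comm_ring_1) mps)"
  by (erule var_cochain[THEN cochain_ord])

lemma zero_cochain[simp]: "mps_zero \<in> cochains k"
  by (simp add: cochains_def mps_zero_def mps_def)


lemma cochain_mps: "f \<in> cochains k \<Longrightarrow> f \<in> mps k"
  by (simp add: cochains_def)

lemma comp_assoc1:
  assumes "length hs = k" "\<forall>h\<in>set hs. ord_ge 1 h" "ord_ge 1 g1"
  shows "mps_comp j (mps_comp k f [g1]) hs = mps_comp j f [mps_comp j g1 hs]"
  using comp_assoc[of hs k "[g1]" j f] assms by simp

lemma comp_assoc2:
  assumes "length hs = k" "\<forall>h\<in>set hs. ord_ge 1 h" "ord_ge 1 g1" "ord_ge 1 g2"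
  shows "mps_comp j (mps_comp k f [g1,g2]) hs = mps_comp j f [mps_comp j g1 hs, mps_comp j g2 hs]"
proof -
  have "\<forall>g\<in>set [g1,g2]. ord_ge 1 g" using assms by simp
  from comp_assoc[OF assms(1,2) this] show ?thesis by simp
qed

lemma ord_comp2:
  assumes "ord_ge 1 g1" "ord_ge 1 g2" "f [0,0] = 0"
  shows "ord_ge 1 (mps_comp k f [g1,g2])"
proof -
  have "\<forall>g\<in>set [g1,g2]. ord_ge 1 g" using assms by simp
  moreover have "f (replicate (length [g1,g2]) 0) = 0" using assms(3) by (simp add: numeral_2_eq_2)
  ultimately have "mps_comp k f [g1,g2] \<in> cochains k" by (rule comp_cochain)
  then show ?thesis by (rule cochain_ord)
qed

locale fglG =
  fixes G :: "('a::comm_ring_1) mps"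
  assumes fgl: "fgl G"
begin

lemma G_mps: "G \<in> mps 2" using fgl by (simp add: fgl_def)

lemma G_r0: "mps_comp 1 G [mps_var 1 0, mps_zero] = mps_var 1 0" using fgl by (simp add: fgl_def)
lemma G_l0: "mps_comp 1 G [mps_zero, mps_var 1 0] = mps_var 1 0" using fgl by (simp add: fgl_def)
lemma G_comm: "mps_comp 2 G [mps_var 2 1, mps_var 2 0] = G" using fgl by (simp add: fgl_def)
lemma G_assoc: "mps_comp 3 G [mps_comp 3 G [mps_var 3 0, mps_var 3 1], mps_var 3 2]
       = mps_comp 3 G [mps_var 3 0, mps_comp 3 G [mps_var 3 1, mps_var 3 2]]" using fgl by (simp add: fgl_def)

lemma G_const: "G [0,0] = 0"
proof -
  have "mps_comp 1 G [mps_var 1 0, mps_zero] [0] = G (replicate 2 0)"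
    using comp_const[of "[mps_var 1 0, mps_zero]" 1 G] var_ord[of 0 1] by (simp add: numeral_2_eq_2 One_nat_def)
  moreover have "mps_var 1 0 [0] = (0::'a)" by (simp add: mps_var_def One_nat_def)
  ultimately show ?thesis using G_r0 by (simp add: numeral_2_eq_2)
qed

lemma cadd_closed: "f \<in> cochains n \<Longrightarrow> g \<in> cochains n \<Longrightarrow> cadd G n f g \<in> cochains n"
  unfolding cadd_def by (rule comp_cochain) (auto intro: cochain_ord simp: G_const numeral_2_eq_2)

lemma comp1: assumes "f \<in> cochains n" shows "mps_comp n (mps_var 1 0) [f] = f"
  using comp_var[of "[f]" 1 0 n] assms cochain_ord cochain_mps by auto

lemma compv: assumes "length hs = k" "\<forall>h\<in>set hs. ord_ge 1 h" "i < k" "hs ! i \<in> cochains n"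
  shows "mps_comp n (mps_var k i) hs = hs ! i"
  using comp_var[of hs k i n] assms cochain_mps by auto

lemma ordc: "f \<in> cochains n \<Longrightarrow> ord_ge 1 f" by (rule cochain_ord)

lemma cadd_r0: assumes f: "f \<in> cochains n" shows "cadd G n f mps_zero = f"
proof -
  have "mps_comp n (mps_comp 1 G [mps_var 1 0, mps_zero]) [f] = mps_comp n G [mps_comp n (mps_var 1 0) [f], mps_comp n mps_zero [f]]"
    by (rule comp_assoc2) (simp_all add: ordc[OF f] var_ord)
  then show ?thesis using G_r0 comp1[OF f] by (simp add: cadd_def)
qed

lemma cadd_l0: assumes f: "f \<in> cochains n" shows "cadd G n mps_zero f = f"
proof -
  have "mps_comp n (mps_comp 1 G [mps_zero, mps_var 1 0]) [f] = mps_comp n G [mps_comp n mps_zero [f], mps_comp n (mps_var 1 0) [f]]"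
    by (rule comp_assoc2) (simp_all add: ordc[OF f] var_ord)
  then show ?thesis using G_l0 comp1[OF f] by (simp add: cadd_def)
qed

lemma cadd_comm: assumes f: "f \<in> cochains n" and g: "g \<in> cochains n" shows "cadd G n f g = cadd G n g f"
proof -
  have o: "\<forall>h\<in>set [f,g]. ord_ge 1 h" using ordc[OF f] ordc[OF g] by simp
  have A: "mps_comp n (mps_comp 2 G [mps_var 2 1, mps_var 2 0]) [f,g] = mps_comp n G [mps_comp n (mps_var 2 1) [f,g], mps_comp n (mps_var 2 0) [f,g]]"
    by (rule comp_assoc2) (simp_all add: o var_ord)
  have B: "mps_comp n (mps_var 2 1) [f,g] = g" using compv[of "[f,g]" 2 1 n] o g by simp
  have C: "mps_comp n (mps_var 2 0) [f,g] = f" using compv[of "[f,g]" 2 0 n] o f by simp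
  have "mps_comp n G [f,g] = mps_comp n (mps_comp 2 G [mps_var 2 1, mps_var 2 0]) [f,g]"
    by (simp only: G_comm)
  also have "\<dots> = mps_comp n G [g, f]" by (simp only: A B C)
  finally show ?thesis by (simp only: cadd_def)
qed

lemma cadd_assoc: assumes f: "f \<in> cochains n" and g: "g \<in> cochains n" and h: "h \<in> cochains n"
  shows "cadd G n (cadd G n f g) h = cadd G n f (cadd G n g h)"
proof -
  let ?hs = "[f,g,h]"
  have l: "length ?hs = 3" by simp
  have o: "\<forall>x\<in>set ?hs. ord_ge 1 x" using ordc[OF f] ordc[OF g] ordc[OF h] by simp
  have v0: "mps_comp n (mps_var 3 0) ?hs = f" using compv[OF l o, of 0 n] f by simp
  have v1: "mps_comp n (mps_var 3 1) ?hs = g" using compv[OF l o, of 1 n] g by simp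
  have v2: "mps_comp n (mps_var 3 2) ?hs = h" using compv[OF l o, of 2 n] h by simp
  have ov0: "ord_ge 1 (mps_var 3 0 :: 'a mps)" by (rule var_ord) simp
  have ov1: "ord_ge 1 (mps_var 3 1 :: 'a mps)" by (rule var_ord) simp
  have ov2: "ord_ge 1 (mps_var 3 2 :: 'a mps)" by (rule var_ord) simp
  have o01: "ord_ge 1 (mps_comp 3 G [mps_var 3 0, mps_var 3 1])"
    using ord_comp2[of "mps_var 3 0" "mps_var 3 1" G 3, OF ov0 ov1 G_const] .
  have o12: "ord_ge 1 (mps_comp 3 G [mps_var 3 1, mps_var 3 2])"
    using ord_comp2[of "mps_var 3 1" "mps_var 3 2" G 3, OF ov1 ov2 G_const] .
  have a01: "mps_comp n (mps_comp 3 G [mps_var 3 0, mps_var 3 1]) ?hs = cadd G n f g"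
    unfolding comp_assoc2[OF l o ov0 ov1] v0 v1 cadd_def ..
  have a12: "mps_comp n (mps_comp 3 G [mps_var 3 1, mps_var 3 2]) ?hs = cadd G n g h"
    unfolding comp_assoc2[OF l o ov1 ov2] v1 v2 cadd_def ..
  have L: "mps_comp n (mps_comp 3 G [mps_comp 3 G [mps_var 3 0, mps_var 3 1], mps_var 3 2]) ?hs = cadd G n (cadd G n f g) h"
    unfolding comp_assoc2[OF l o o01 ov2] a01 v2 cadd_def ..
  have R: "mps_comp n (mps_comp 3 G [mps_var 3 0, mps_comp 3 G [mps_var 3 1, mps_var 3 2]]) ?hs = cadd G n f (cadd G n g h)"
    unfolding comp_assoc2[OF l o ov0 o12] a12 v0 cadd_def ..
  have "cadd G n (cadd G n f g) h = mps_comp n (mps_comp 3 G [mps_comp 3 G [mps_var 3 0, mps_var 3 1], mps_var 3 2]) ?hs"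
    by (rule L[symmetric])
  also have "\<dots> = mps_comp n (mps_comp 3 G [mps_var 3 0, mps_comp 3 G [mps_var 3 1, mps_var 3 2]]) ?hs"
    by (simp only: G_assoc)
  also have "\<dots> = cadd G n f (cadd G n g h)" by (rule R)
  finally show ?thesis .
qed

end


lemma mps_out: "f \<in> mps k \<Longrightarrow> length e \<noteq> k \<Longrightarrow> f e = 0"
  by (simp add: mps_def)

section \<open>Agreement up to a degree\<close>

definition agree :: "nat \<Rightarrow> ('a::comm_ring_1) mps \<Rightarrow> 'a mps \<Rightarrow> bool" where
  "agree m f g \<longleftrightarrow> (\<forall>e. sum_list e \<le> m \<longrightarrow> f e = g e)"

lemma agree_refl[simp]: "agree m f f" by (simp add: agree_def)
lemma agree_sym: "agree m f g \<Longrightarrow> agree m g f" by (simp add: agree_def)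
lemma agree_trans: "agree m f g \<Longrightarrow> agree m g h \<Longrightarrow> agree m f h" by (simp add: agree_def)
lemma agree_mono: "agree m f g \<Longrightarrow> m' \<le> m \<Longrightarrow> agree m' f g" by (simp add: agree_def)

lemma agree_mult_ord:
  assumes f: "ord_ge p f" and g: "agree m g g'"
  shows "agree (m + p) (mps_mult k f g) (mps_mult k f g')"
  unfolding agree_def
proof (intro allI impI)
  fix e :: "nat list" assume e: "sum_list e \<le> m + p"
  show "mps_mult k f g e = mps_mult k f g' e"
  proof (cases "length e = k")
    case True
    have "(\<Sum>(a,b)\<in>pairs e. f a * g b) = (\<Sum>(a,b)\<in>pairs e. f a * g' b)"
    proof (rule sum.cong[OF refl])
      fix x assume "x \<in> pairs e"
      then obtain a b where x: "x = (a,b)" "length a = length e" "length b = length e" "ladd a b = e"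
        by (cases x) (auto simp: pairs_def)
      then have s: "sum_list a + sum_list b \<le> m + p" using e sum_list_ladd[of a b] by simp
      show "(case x of (a, b) \<Rightarrow> f a * g b) = (case x of (a, b) \<Rightarrow> f a * g' b)"
      proof (cases "sum_list a < p")
        case True then have "f a = 0" using f by (simp add: ord_ge_def)
        then show ?thesis using x by simp
      next
        case False then have "sum_list b \<le> m" using s by linarith
        then have "g b = g' b" using g by (simp add: agree_def)
        then show ?thesis using x by simp
      qed
    qed
    then show ?thesis using True by (simp add: mps_mult_pairs)
  qed (simp add: mps_mult_def)
qed

lemma agree_mult:
  assumes "agree m f f'" "agree m g g'"
  shows "agree m (mps_mult k f g) (mps_mult k f' g')"
proof -
  have "agree (m+0) (mps_mult k f g) (mps_mult k f g')" by (rule agree_mult_ord) (simp_all add: assms)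
  moreover have "agree (m+0) (mps_mult k g' f) (mps_mult k g' f')" by (rule agree_mult_ord) (simp_all add: assms)
  ultimately show ?thesis using mps_mult_comm[of k g' f] mps_mult_comm[of k g' f'] agree_trans by fastforce
qed

lemma agree_pow: "agree m f f' \<Longrightarrow> agree m (mps_pow k f n) (mps_pow k f' n)"
  by (induction n) (simp_all add: mps_pow_Suc agree_mult)

lemma agree_cochains0: "f \<in> cochains 1 \<Longrightarrow> g \<in> cochains 1 \<Longrightarrow> agree 0 f g"
  unfolding agree_def
proof (intro allI impI)
  fix e :: "nat list" assume f: "f \<in> cochains 1" and g: "g \<in> cochains 1" and e: "sum_list e \<le> 0"
  show "f e = g e"
  proof (cases "length e = 1")
    case True
    then have "e = replicate 1 0" using e sum_list_zero_iff by (metis le_zero_eq)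
    then show ?thesis using f g by (simp add: cochains_def)
  next
    case False then show ?thesis using f g by (simp add: cochains_def mps_def)
  qed
qed

section \<open>One-variable computations\<close>

abbreviation X1 :: "('a::comm_ring_1) mps" where "X1 \<equiv> mps_var 1 0"

lemma divisors_single: "[a] \<in> divisors_exp [b] \<longleftrightarrow> a \<le> b"
  by (simp add: divisors_exp_def)

lemma X1_shift: "mps_mult 1 X1 f [b] = (if b = 0 then 0 else f [b - 1])"
proof -
  have "mps_mult 1 X1 f [b] = (\<Sum>a\<in>divisors_exp [b]. X1 a * f (map2 (-) [b] a))"
    by (simp add: mps_mult_def)
  also have "\<dots> = (\<Sum>a\<in>divisors_exp [b]. if a = [1] then f (map2 (-) [b] a) else 0)"
    by (rule sum.cong[OF refl]) (simp add: mps_var_def One_nat_def)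
  also have "\<dots> = (if [1] \<in> divisors_exp [b] then f (map2 (-) [b] [1]) else 0)"
    by (simp add: sum.delta[OF finite_divisors_exp])
  also have "\<dots> = (if b = 0 then 0 else f [b - 1])"
    by (simp add: divisors_single)
  finally show ?thesis .
qed

lemma X1_pow: "mps_pow 1 (X1::'a::comm_ring_1 mps) m e = (if e = [m] then 1 else 0)"
proof (induction m arbitrary: e)
  case 0 then show ?case by (simp add: mps_one_def One_nat_def)
next
  case (Suc m)
  show ?case
  proof (cases "length e = 1")
    case False
    then have "mps_pow 1 (X1::'a mps) (Suc m) e = 0" by (rule mps_out[OF mps_pow_in])
    then show ?thesis using False by auto
  next
    case True
    then obtain b where b: "e = [b]" by (cases e) (auto simp: One_nat_def)
    then show ?thesis using Suc by (cases b) (simp_all add: mps_pow_Suc X1_shift)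
  qed
qed

lemma mult_zero_left[simp]: "mps_mult k mps_zero f = mps_zero"
  by (rule ext) (simp add: mps_mult_def mps_zero_def)

lemma zero_pow_Suc: "mps_pow k mps_zero (Suc m) = mps_zero"
  by (simp add: mps_pow_Suc)


lemma P_zX: "P 1 [mps_zero, X1] [a, b] c = (if a = 0 \<and> c = [b] then (1::'a::comm_ring_1) else 0)"
proof (cases a)
  case 0
  have "P 1 [mps_zero, X1] [a, b] = (mps_pow 1 (X1::'a mps) b)"
    using 0 by (simp add: mps_mult_one_left mps_mult_one_right)
  then show ?thesis using 0 X1_pow[of b c] by auto
next
  case (Suc a') then show ?thesis by (simp add: zero_pow_Suc) (simp add: mps_zero_def)
qed

lemma Bset2: "d \<in> Bset 2 N \<Longrightarrow> \<exists>x y. d = [x, y]"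
  by (cases d; cases "tl d") (auto simp: Bset_def numeral_2_eq_2)

definition RG :: "('a::comm_ring_1) mps \<Rightarrow> 'a mps" where
  "RG G = (\<lambda>c. if hd c = 0 then 0 else G c)"

definition DG :: "('a::comm_ring_1) mps \<Rightarrow> 'a mps \<Rightarrow> 'a mps" where
  "DG G i = mps_comp 1 (RG G) [X1, i]"

primrec seqI :: "('a::comm_ring_1) mps \<Rightarrow> nat \<Rightarrow> 'a mps" where
  "seqI G 0 = mps_zero"
| "seqI G (Suc m) = (\<lambda>e. - DG G (seqI G m) e)"

context fglG
begin

lemma X1_ord: "ord_ge 1 (X1::'a mps)" by (rule var_ord) simp

lemma G0b: "G [0, b] = (if b = 1 then 1 else 0)"
proof -
  have o: "\<forall>h\<in>set [mps_zero, X1::'a mps]. ord_ge 1 h" using X1_ord by simp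
  have "mps_comp 1 G [mps_zero, X1] [b] = (\<Sum>d\<in>Bset 2 b. G d * P 1 [mps_zero, X1] d [b])"
    using comp_range[of "[b]" 1 "[mps_zero, X1::'a mps]" b G] o by (simp add: One_nat_def numeral_2_eq_2)
  also have "\<dots> = (\<Sum>d\<in>Bset 2 b. if d = [0, b] then G d else 0)"
  proof (rule sum.cong[OF refl])
    fix d assume "d \<in> Bset 2 b"
    then obtain x y where d: "d = [x, y]" using Bset2 by blast
    show "G d * P 1 [mps_zero, X1] d [b] = (if d = [0, b] then G d else 0)"
      unfolding d P_zX by auto
  qed
  also have "\<dots> = G [0, b]" by (subst sum.delta[OF finite_Bset]) (simp add: Bset_def)
  finally have "mps_comp 1 G [mps_zero, X1] [b] = G [0, b]" .
  then show ?thesis using G_l0 by (simp add: mps_var_def One_nat_def)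
qed

lemma G_decomp: "G = mps_add (mps_var 2 1) (RG G)"
proof (rule ext)
  fix c
  show "G c = mps_add (mps_var 2 1) (RG G) c"
  proof (cases "length c = 2")
    case False
    have g: "G c = 0" by (rule mps_out[OF G_mps False])
    have v: "mps_var 2 1 c = (0::'a)" by (rule mps_out[OF var_in_mps False])
    show ?thesis unfolding mps_add_def RG_def g v by simp
  next
    case True
    then obtain x y where c: "c = [x, y]" by (cases c; cases "tl c") (auto simp: numeral_2_eq_2)
    show ?thesis
    proof (cases "x = 0")
      case True then show ?thesis using c G0b[of y]
        by (simp add: mps_add_def RG_def mps_var_def numeral_2_eq_2 One_nat_def)
    next
      case False then show ?thesis using c
        by (simp add: mps_add_def RG_def mps_var_def numeral_2_eq_2 One_nat_def)
    qed
  qed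
qed

lemma RG_const: "RG G [0,0] = 0" by (simp add: RG_def)

lemma G_X1_split: assumes i: "i \<in> cochains 1"
  shows "mps_comp 1 G [X1, i] = mps_add i (DG G i)"
proof -
  have o: "\<forall>h\<in>set [X1, i]. ord_ge 1 h" using X1_ord ordc[OF i] by simp
  have "mps_comp 1 (mps_var 2 1) [X1, i] = i"
    using compv[of "[X1, i]" 2 1 1] o i by simp
  then show ?thesis
    by (subst G_decomp) (simp add: comp_add_left DG_def)
qed

lemma DG_cochain: "i \<in> cochains 1 \<Longrightarrow> DG G i \<in> cochains 1"
  unfolding DG_def by (rule comp_cochain) (simp_all add: X1_ord ordc numeral_2_eq_2 RG_const)

lemma DG_contract:
  assumes i: "i \<in> cochains 1" and j: "j \<in> cochains 1" and a: "agree m i j"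
  shows "agree (m+1) (DG G i) (DG G j)"
  unfolding agree_def
proof (intro allI impI)
  fix e :: "nat list" assume e: "sum_list e \<le> m + 1"
  show "DG G i e = DG G j e"
  proof (cases "length e = 1")
    case False then show ?thesis by (simp add: DG_def comp_out)
  next
    case True
    have oi: "\<forall>h\<in>set [X1, i]. ord_ge 1 h" using X1_ord ordc[OF i] by simp
    have oj: "\<forall>h\<in>set [X1, j]. ord_ge 1 h" using X1_ord ordc[OF j] by simp
    have "DG G i e = (\<Sum>c\<in>Bset 2 (m+1). RG G c * P 1 [X1, i] c e)"
      using comp_range[of e 1 "[X1, i]" "m+1" "RG G"] True oi e by (simp add: DG_def numeral_2_eq_2)
    also have "\<dots> = (\<Sum>c\<in>Bset 2 (m+1). RG G c * P 1 [X1, j] c e)"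
    proof (rule sum.cong[OF refl])
      fix c assume "c \<in> Bset 2 (m+1)"
      then obtain x y where c: "c = [x, y]" using Bset2 by blast
      show "RG G c * P 1 [X1, i] c e = RG G c * P 1 [X1, j] c e"
      proof (cases x)
        case 0 then show ?thesis using c by (simp add: RG_def)
      next
        case (Suc x')
        have ag: "agree m (mps_mult 1 (mps_pow 1 X1 x') (mps_mult 1 (mps_pow 1 i y) (mps_one 1)))
                           (mps_mult 1 (mps_pow 1 X1 x') (mps_mult 1 (mps_pow 1 j y) (mps_one 1)))"
          by (intro agree_mult agree_pow a agree_refl)
        have "agree (m+1) (mps_mult 1 X1 (mps_mult 1 (mps_pow 1 X1 x') (mps_mult 1 (mps_pow 1 i y) (mps_one 1))))
                           (mps_mult 1 X1 (mps_mult 1 (mps_pow 1 X1 x') (mps_mult 1 (mps_pow 1 j y) (mps_one 1))))"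
          by (rule agree_mult_ord[OF X1_ord ag])
        then have "P 1 [X1, i] c e = P 1 [X1, j] c e"
          using c Suc e by (simp add: agree_def mps_pow_Suc mps_mult_assoc)
        then show ?thesis by simp
      qed
    qed
    also have "\<dots> = DG G j e"
      using comp_range[of e 1 "[X1, j]" "m+1" "RG G"] True oj e by (simp add: DG_def numeral_2_eq_2)
    finally show ?thesis .
  qed
qed

lemma seq_cochain: "seqI G m \<in> cochains 1"
proof (induction m)
  case 0 then show ?case by simp
next
  case (Suc m)
  have "DG G (seqI G m) \<in> cochains 1" by (rule DG_cochain[OF Suc])
  then show ?case by (simp add: cochains_def mps_def)
qed

lemma seq_agree_Suc: "agree m (seqI G m) (seqI G (Suc m))"
proof (induction m)
  case 0 then show ?case using agree_cochains0 seq_cochain by blast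
next
  case (Suc m)
  have "agree (m+1) (DG G (seqI G m)) (DG G (seqI G (Suc m)))"
    by (rule DG_contract[OF seq_cochain seq_cochain Suc])
  then show ?case by (simp add: agree_def)
qed

lemma seq_agree: "m \<le> m' \<Longrightarrow> agree m (seqI G m) (seqI G m')"
proof (induction m' rule: dec_induct)
  case base then show ?case by simp
next
  case (step k)
  have "agree m (seqI G k) (seqI G (Suc k))" using agree_mono[OF seq_agree_Suc[of k] step(1)] .
  then show ?case using step(3) agree_trans by blast
qed

definition iG :: "'a mps" where "iG = (\<lambda>e. seqI G (sum_list e) e)"

lemma iG_agree: "agree m iG (seqI G m)"
  unfolding agree_def
proof (intro allI impI)
  fix e :: "nat list" assume "sum_list e \<le> m"
  then have "agree (sum_list e) (seqI G (sum_list e)) (seqI G m)" by (rule seq_agree)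
  then show "iG e = seqI G m e" by (simp add: agree_def iG_def)
qed

lemma iG_cochain: "iG \<in> cochains 1"
proof -
  have "\<And>e. length e \<noteq> 1 \<Longrightarrow> iG e = 0"
    unfolding iG_def using seq_cochain by (simp add: cochains_def mps_def)
  moreover have "iG [0] = 0" by (simp add: iG_def mps_zero_def)
  ultimately show ?thesis by (simp add: cochains_def mps_def One_nat_def)
qed

lemma iG_inverse: "mps_comp 1 G [X1, iG] = mps_zero"
proof (rule ext)
  fix e
  show "mps_comp 1 G [X1, iG] e = mps_zero e"
  proof (cases "length e = 1")
    case False then show ?thesis by (simp add: comp_out mps_zero_def)
  next
    case True
    define m where "m = sum_list e"
    have "DG G iG e = DG G (seqI G m) e"
      using DG_contract[OF iG_cochain seq_cochain iG_agree[of m]] by (simp add: agree_def m_def)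
    moreover have "iG e = seqI G (Suc m) e"
      using iG_agree[of "Suc m"] by (simp add: agree_def m_def)
    ultimately show ?thesis
      using G_X1_split[OF iG_cochain] by (simp add: mps_add_def mps_zero_def)
  qed
qed

lemma inv_exists: "\<exists>i. i \<in> mps 1 \<and> i [0] = 0 \<and> mps_comp 1 G [mps_var 1 0, i] = mps_zero"
  using iG_cochain iG_inverse by (auto simp: cochains_def One_nat_def)

lemma fgl_inv_props: "fgl_inv G \<in> cochains 1" "mps_comp 1 G [mps_var 1 0, fgl_inv G] = mps_zero"
proof -
  have "fgl_inv G \<in> mps 1 \<and> fgl_inv G [0] = 0 \<and> mps_comp 1 G [mps_var 1 0, fgl_inv G] = mps_zero"
    unfolding fgl_inv_def by (rule someI_ex[OF inv_exists])
  then show "fgl_inv G \<in> cochains 1" "mps_comp 1 G [mps_var 1 0, fgl_inv G] = mps_zero"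
    by (simp_all add: cochains_def One_nat_def)
qed

lemma cneg_cochain: "f \<in> cochains n \<Longrightarrow> cneg G n f \<in> cochains n"
  unfolding cneg_def
proof (rule comp_cochain)
  assume f: "f \<in> cochains n"
  show "\<forall>g\<in>set [f]. ord_ge 1 g" using ordc[OF f] by simp
  show "fgl_inv G (replicate (length [f]) 0) = 0" using fgl_inv_props(1) by (simp add: cochains_def One_nat_def)
qed

lemma cadd_cneg: assumes f: "f \<in> cochains n" shows "cadd G n f (cneg G n f) = mps_zero"
proof -
  have "mps_comp n (mps_comp 1 G [X1, fgl_inv G]) [f] = mps_comp n G [mps_comp n X1 [f], mps_comp n (fgl_inv G) [f]]"
    by (rule comp_assoc2) (simp_all add: ordc[OF f] X1_ord ordc[OF fgl_inv_props(1)])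
  then show ?thesis using fgl_inv_props(2) comp1[OF f] by (simp add: cadd_def cneg_def)
qed

lemma cochain_group_comm: "comm_group (cochain_group G n)"
proof (rule comm_groupI)
  show "\<one>\<^bsub>cochain_group G n\<^esub> \<in> carrier (cochain_group G n)" by (simp add: cochain_group_def)
next
  fix x y assume "x \<in> carrier (cochain_group G n)" "y \<in> carrier (cochain_group G n)"
  then show "x \<otimes>\<^bsub>cochain_group G n\<^esub> y \<in> carrier (cochain_group G n)"
    by (simp add: cochain_group_def cadd_closed)
next
  fix x y z assume "x \<in> carrier (cochain_group G n)" "y \<in> carrier (cochain_group G n)" "z \<in> carrier (cochain_group G n)"
  then show "x \<otimes>\<^bsub>cochain_group G n\<^esub> y \<otimes>\<^bsub>cochain_group G n\<^esub> z = x \<otimes>\<^bsub>cochain_group G n\<^esub> (y \<otimes>\<^bsub>cochain_group G n\<^esub> z)"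
    by (simp add: cochain_group_def cadd_assoc)
next
  fix x y assume "x \<in> carrier (cochain_group G n)" "y \<in> carrier (cochain_group G n)"
  then show "x \<otimes>\<^bsub>cochain_group G n\<^esub> y = y \<otimes>\<^bsub>cochain_group G n\<^esub> x"
    by (simp add: cochain_group_def cadd_comm)
next
  fix x assume "x \<in> carrier (cochain_group G n)"
  then show "\<one>\<^bsub>cochain_group G n\<^esub> \<otimes>\<^bsub>cochain_group G n\<^esub> x = x"
    by (simp add: cochain_group_def cadd_l0)
next
  fix x assume x: "x \<in> carrier (cochain_group G n)"
  then have "cneg G n x \<in> cochains n" "cadd G n (cneg G n x) x = mps_zero"
    using cneg_cochain cadd_cneg cadd_comm by (auto simp: cochain_group_def)
  then show "\<exists>y\<in>carrier (cochain_group G n). y \<otimes>\<^bsub>cochain_group G n\<^esub> x = \<one>\<^bsub>cochain_group G n\<^esub>"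
    by (auto simp: cochain_group_def)
qed

end


lemma hom_prod_comm:
  assumes H: "comm_group H" and A: "group A" and f: "f \<in> hom A H" and g: "g \<in> hom A H"
  shows "(\<lambda>x. f x \<otimes>\<^bsub>H\<^esub> g x) \<in> hom A H"
proof (rule homI)
  interpret H: comm_group H by (rule H)
  fix x assume x: "x \<in> carrier A"
  show "f x \<otimes>\<^bsub>H\<^esub> g x \<in> carrier H" using f g x by (simp add: hom_in_carrier)
next
  interpret H: comm_group H by (rule H)
  interpret A: group A by (rule A)
  fix x y assume x: "x \<in> carrier A" and y: "y \<in> carrier A"
  have fx: "f x \<in> carrier H" and fy: "f y \<in> carrier H" and gx: "g x \<in> carrier H" and gy: "g y \<in> carrier H"
    using f g x y by (simp_all add: hom_in_carrier)
  have "f (x \<otimes>\<^bsub>A\<^esub> y) \<otimes>\<^bsub>H\<^esub> g (x \<otimes>\<^bsub>A\<^esub> y) = (f x \<otimes>\<^bsub>H\<^esub> f y) \<otimes>\<^bsub>H\<^esub> (g x \<otimes>\<^bsub>H\<^esub> g y)"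
    by (simp add: Group.hom_mult[OF f x y] Group.hom_mult[OF g x y])
  also have "\<dots> = (f x \<otimes>\<^bsub>H\<^esub> g x) \<otimes>\<^bsub>H\<^esub> (f y \<otimes>\<^bsub>H\<^esub> g y)"
    using fx fy gx gy by (simp add: H.m_ac)
  finally show "f (x \<otimes>\<^bsub>A\<^esub> y) \<otimes>\<^bsub>H\<^esub> g (x \<otimes>\<^bsub>A\<^esub> y) = (f x \<otimes>\<^bsub>H\<^esub> g x) \<otimes>\<^bsub>H\<^esub> (f y \<otimes>\<^bsub>H\<^esub> g y)" .
qed

lemma hom_inv_comm:
  assumes H: "comm_group H" and A: "group A" and f: "f \<in> hom A H"
  shows "(\<lambda>x. inv\<^bsub>H\<^esub> f x) \<in> hom A H"
proof (rule homI)
  interpret H: comm_group H by (rule H)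
  fix x assume x: "x \<in> carrier A"
  show "inv\<^bsub>H\<^esub> f x \<in> carrier H" using f x by (simp add: hom_in_carrier)
next
  interpret H: comm_group H by (rule H)
  interpret A: group A by (rule A)
  fix x y assume x: "x \<in> carrier A" and y: "y \<in> carrier A"
  have fx: "f x \<in> carrier H" and fy: "f y \<in> carrier H" using f x y by (simp_all add: hom_in_carrier)
  show "inv\<^bsub>H\<^esub> f (x \<otimes>\<^bsub>A\<^esub> y) = inv\<^bsub>H\<^esub> f x \<otimes>\<^bsub>H\<^esub> inv\<^bsub>H\<^esub> f y"
    by (simp add: Group.hom_mult[OF f x y] H.inv_mult[OF fx fy])
qed

lemma foldl_hom:
  assumes H: "comm_group H" and A: "group A" and h: "\<forall>i\<in>set L. h i \<in> hom A H"
  shows "(\<lambda>x. foldl (\<lambda>acc i. acc \<otimes>\<^bsub>H\<^esub> h i x) \<one>\<^bsub>H\<^esub> L) \<in> hom A H"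
  using h
proof (induction L rule: rev_induct)
  case Nil
  interpret H: comm_group H by (rule H)
  interpret A: group A by (rule A)
  show ?case by (rule homI) simp_all
next
  case (snoc i L)
  have "(\<lambda>x. foldl (\<lambda>acc i. acc \<otimes>\<^bsub>H\<^esub> h i x) \<one>\<^bsub>H\<^esub> L \<otimes>\<^bsub>H\<^esub> h i x) \<in> hom A H"
    by (rule hom_prod_comm[OF H A]) (use snoc in auto)
  then show ?case by simp
qed

section \<open>Faces and the coboundary\<close>

lemma length_face_subst[simp]: "length (face_subst F n i) = n"
  by (simp add: face_subst_def)

locale cob =
  fixes F G :: "('a::comm_ring_1) mps"
  assumes fglF: "fgl F" and fglG: "fgl G"
begin

sublocale G: fglG G by (rule fglG.intro[OF fglG])

lemma F_const: "F [0,0] = 0" using fglG.G_const[OF fglG.intro[OF fglF]] .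

lemma face_subst_cochains: "\<forall>g\<in>set (face_subst F n i). g \<in> cochains (n+1)"
proof -
  have v: "\<And>j. j < n + 1 \<Longrightarrow> mps_var (n+1) j \<in> cochains (n+1)" by (rule var_cochain)
  have c: "\<And>a b. a < n+1 \<Longrightarrow> b < n+1 \<Longrightarrow> mps_comp (n+1) F [mps_var (n+1) a, mps_var (n+1) b] \<in> cochains (n+1)"
  proof -
    fix a b assume "a < n+1" "b < n+1"
    then have "ord_ge 1 (mps_var (n+1) a :: 'a mps)" "ord_ge 1 (mps_var (n+1) b :: 'a mps)" by (simp_all add: var_ord)
    then have "\<forall>g\<in>set [mps_var (n+1) a, mps_var (n+1) b :: 'a mps]. ord_ge 1 g" by simp
    then show "mps_comp (n+1) F [mps_var (n+1) a, mps_var (n+1) b] \<in> cochains (n+1)"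
      by (rule comp_cochain) (simp add: F_const numeral_2_eq_2)
  qed
  show ?thesis unfolding face_subst_def by (auto intro!: v c)
qed

lemma face_subst_ord: "\<forall>g\<in>set (face_subst F n i). ord_ge 1 g"
  using face_subst_cochains cochain_ord by blast

lemma face_cochain: "f \<in> cochains n \<Longrightarrow> face F n i f \<in> cochains (n+1)"
  unfolding face_def by (rule comp_cochain) (simp_all add: face_subst_ord cochains_def)

lemma face_cadd: assumes f: "f \<in> cochains n" and g: "g \<in> cochains n"
  shows "face F n i (cadd G n f g) = cadd G (n+1) (face F n i f) (face F n i g)"
  unfolding face_def cadd_def
  by (rule comp_assoc2) (simp_all add: face_subst_ord cochain_ord[OF f] cochain_ord[OF g])

lemma face_hom: "face F n i \<in> hom (cochain_group G n) (cochain_group G (n+1))"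
  by (rule homI) (simp_all add: cochain_group_def face_cochain face_cadd)

lemma inv_is_cneg: "x \<in> cochains m \<Longrightarrow> inv\<^bsub>cochain_group G m\<^esub> x = cneg G m x"
proof -
  assume x: "x \<in> cochains m"
  interpret A: comm_group "cochain_group G m" by (rule G.cochain_group_comm)
  show ?thesis
    by (rule A.inv_equality) (use x G.cadd_cneg G.cadd_comm G.cneg_cochain in \<open>auto simp: cochain_group_def\<close>)
qed

lemma coboundary_foldl: "coboundary F G n f = foldl (\<lambda>acc i. acc \<otimes>\<^bsub>cochain_group G (n+1)\<^esub>
      (if even i then face F n i f else inv\<^bsub>cochain_group G (n+1)\<^esub> (face F n i f))) \<one>\<^bsub>cochain_group G (n+1)\<^esub> [0..<n+2]"
  if "f \<in> cochains n"
proof -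
  have "\<And>i. (if even i then face F n i f else cneg G (n+1) (face F n i f)) =
           (if even i then face F n i f else inv\<^bsub>cochain_group G (n+1)\<^esub> (face F n i f))"
    using inv_is_cneg face_cochain[OF that] by simp
  then show ?thesis by (simp add: coboundary_def cochain_group_def)
qed

lemma coboundary_hom: "coboundary F G n \<in> hom (cochain_group G n) (cochain_group G (n+1))"
proof -
  interpret A: comm_group "cochain_group G n" by (rule G.cochain_group_comm)
  define hh where "hh = (\<lambda>i f. if even i then face F n i f else inv\<^bsub>cochain_group G (n+1)\<^esub> (face F n i f))"
  define Fo where "Fo = (\<lambda>x. foldl (\<lambda>acc i. acc \<otimes>\<^bsub>cochain_group G (n+1)\<^esub> hh i x) \<one>\<^bsub>cochain_group G (n+1)\<^esub> [0..<n+2])"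
  have h: "Fo \<in> hom (cochain_group G n) (cochain_group G (n+1))"
    unfolding Fo_def
  proof (rule foldl_hom[OF G.cochain_group_comm A.is_group], rule ballI)
    fix i
    show "hh i \<in> hom (cochain_group G n) (cochain_group G (n+1))"
    proof (cases "even i")
      case True then show ?thesis using face_hom by (simp add: hh_def)
    next
      case False then show ?thesis
        using hom_inv_comm[OF G.cochain_group_comm A.is_group face_hom] by (simp add: hh_def)
    qed
  qed
  have eq: "\<And>x. x \<in> carrier (cochain_group G n) \<Longrightarrow> coboundary F G n x = Fo x"
    unfolding Fo_def hh_def by (rule coboundary_foldl) (simp add: cochain_group_def)
  show ?thesis
  proof (rule homI)
    fix x assume "x \<in> carrier (cochain_group G n)"
    then show "coboundary F G n x \<in> carrier (cochain_group G (n+1))"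
      using hom_in_carrier[OF h] eq by simp
  next
    fix x y assume x: "x \<in> carrier (cochain_group G n)" and y: "y \<in> carrier (cochain_group G n)"
    then have xy: "x \<otimes>\<^bsub>cochain_group G n\<^esub> y \<in> carrier (cochain_group G n)" by simp
    show "coboundary F G n (x \<otimes>\<^bsub>cochain_group G n\<^esub> y) = coboundary F G n x \<otimes>\<^bsub>cochain_group G (n+1)\<^esub> coboundary F G n y"
      using Group.hom_mult[OF h x y] eq[OF x] eq[OF y] eq[OF xy] by simp
  qed
qed


lemma cob_carrier: "f \<in> cochains n \<Longrightarrow> coboundary F G n f \<in> cochains (n+1)"
  using hom_in_carrier[OF coboundary_hom, of f n] by (simp add: cochain_group_def)

lemma cob_zero: "coboundary F G n mps_zero = mps_zero"
proof -
  interpret A: comm_group "cochain_group G n" by (rule G.cochain_group_comm)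
  interpret B: comm_group "cochain_group G (n+1)" by (rule G.cochain_group_comm)
  have "group_hom (cochain_group G n) (cochain_group G (n+1)) (coboundary F G n)"
    by (rule group_hom.intro[OF A.is_group B.is_group]) (simp add: group_hom_axioms_def coboundary_hom)
  then show ?thesis using group_hom.hom_one by (fastforce simp: cochain_group_def)
qed

lemma cob_cadd: "f \<in> cochains n \<Longrightarrow> g \<in> cochains n \<Longrightarrow>
   coboundary F G n (cadd G n f g) = cadd G (n+1) (coboundary F G n f) (coboundary F G n g)"
  using Group.hom_mult[OF coboundary_hom, of f n g] by (simp add: cochain_group_def)

lemma cob_cneg: assumes f: "f \<in> cochains n"
  shows "coboundary F G n (cneg G n f) = cneg G (n+1) (coboundary F G n f)"
proof -
  interpret A: comm_group "cochain_group G n" by (rule G.cochain_group_comm)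
  interpret B: comm_group "cochain_group G (n+1)" by (rule G.cochain_group_comm)
  have gh: "group_hom (cochain_group G n) (cochain_group G (n+1)) (coboundary F G n)"
    by (rule group_hom.intro[OF A.is_group B.is_group]) (simp add: group_hom_axioms_def coboundary_hom)
  have "coboundary F G n (inv\<^bsub>cochain_group G n\<^esub> f) = inv\<^bsub>cochain_group G (n+1)\<^esub> (coboundary F G n f)"
    using group_hom.hom_inv[OF gh] f by (simp add: cochain_group_def)
  then show ?thesis using inv_is_cneg f cob_carrier by simp
qed

end

lemma fglG_inv_is_cneg: "fgl G \<Longrightarrow> x \<in> cochains m \<Longrightarrow> inv\<^bsub>cochain_group G m\<^esub> x = cneg G m x"
  using cob.inv_is_cneg[of G G] by (simp add: cob_def)

lemma cneg_map:
  assumes G: "fgl G" and h: "is_ring_hom \<psi>" and x: "x \<in> cochains m"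
  shows "mps_map \<psi> (cneg G m x) = cneg (mps_map \<psi> G) m (mps_map \<psi> x)"
proof -
  have G': "fgl (mps_map \<psi> G)" by (rule fgl_map[OF h G])
  interpret GG: fglG G by (rule fglG.intro[OF G])
  interpret GG': fglG "mps_map \<psi> G" by (rule fglG.intro[OF G'])
  interpret A: comm_group "cochain_group (mps_map \<psi> G) m" by (rule GG'.cochain_group_comm)
  have c1: "mps_map \<psi> (cneg G m x) \<in> cochains m" by (rule map_cochains[OF h GG.cneg_cochain[OF x]])
  have c2: "mps_map \<psi> x \<in> cochains m" by (rule map_cochains[OF h x])
  have "cadd (mps_map \<psi> G) m (mps_map \<psi> (cneg G m x)) (mps_map \<psi> x) = mps_map \<psi> (cadd G m (cneg G m x) x)"
    by (simp add: cadd_def map_comp[OF h])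
  also have "\<dots> = mps_zero" using GG.cadd_cneg[OF x] GG.cadd_comm[OF x GG.cneg_cochain[OF x]] map_zero[OF h] by simp
  finally have "inv\<^bsub>cochain_group (mps_map \<psi> G) m\<^esub> (mps_map \<psi> x) = mps_map \<psi> (cneg G m x)"
    by (intro A.inv_equality) (simp_all add: cochain_group_def c1 c2)
  then show ?thesis using fglG_inv_is_cneg[OF G' c2] by simp
qed

lemma cadd_map: "is_ring_hom \<psi> \<Longrightarrow> mps_map \<psi> (cadd G m x y) = cadd (mps_map \<psi> G) m (mps_map \<psi> x) (mps_map \<psi> y)"
  by (simp add: cadd_def map_comp)

lemma face_subst_map: "is_ring_hom \<psi> \<Longrightarrow> map (mps_map \<psi>) (face_subst F n i) = face_subst (mps_map \<psi> F) n i"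
  by (simp add: face_subst_def map_var map_comp)

lemma face_map: "is_ring_hom \<psi> \<Longrightarrow> mps_map \<psi> (face F n i f) = face (mps_map \<psi> F) n i (mps_map \<psi> f)"
  by (simp add: face_def map_comp face_subst_map)

lemma coboundary_map:
  assumes F: "fgl F" and G: "fgl G" and h: "is_ring_hom \<psi>" and f: "f \<in> cochains n"
  shows "mps_map \<psi> (coboundary F G n f) = coboundary (mps_map \<psi> F) (mps_map \<psi> G) n (mps_map \<psi> f)"
proof -
  interpret C: cob F G by (rule cob.intro[OF F G])
  define st where "st = (\<lambda>acc i. cadd G (n+1) acc (if even i then face F n i f else cneg G (n+1) (face F n i f)))"
  define st' where "st' = (\<lambda>acc i. cadd (mps_map \<psi> G) (n+1) acc
       (if even i then face (mps_map \<psi> F) n i (mps_map \<psi> f) else cneg (mps_map \<psi> G) (n+1) (face (mps_map \<psi> F) n i (mps_map \<psi> f))))"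
  have gen: "acc \<in> cochains (n+1) \<Longrightarrow> mps_map \<psi> (foldl st acc L) = foldl st' (mps_map \<psi> acc) L" for acc L
  proof (induction L arbitrary: acc)
    case Nil then show ?case by simp
  next
    case (Cons i L)
    have fc: "face F n i f \<in> cochains (n+1)" by (rule C.face_cochain[OF f])
    have t: "(if even i then face F n i f else cneg G (n+1) (face F n i f)) \<in> cochains (n+1)"
      using fc C.G.cneg_cochain[OF fc] by simp
    have a: "st acc i \<in> cochains (n+1)" unfolding st_def by (rule C.G.cadd_closed[OF Cons.prems t])
    have "mps_map \<psi> (st acc i) = st' (mps_map \<psi> acc) i"
      unfolding st_def st'_def using cneg_map[OF G h fc]
      by (simp add: cadd_map[OF h] face_map[OF h])
    then show ?case using Cons.IH[OF a] by simp
  qed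
  from gen[OF zero_cochain, of "[0..<n+2]"]
  have key: "mps_map \<psi> (foldl st mps_zero [0..<n+2]) = foldl st' mps_zero [0..<n+2]"
    by (simp only: map_zero[OF h])
  show ?thesis unfolding coboundary_def using key unfolding st_def st'_def .
qed


section \<open>Dual number arithmetic\<close>

lemma dual_plus[simp]: "Dual a b + Dual c d = Dual (a + c) (b + d)" by (simp add: plus_dual_def)
lemma dual_times[simp]: "Dual a b * Dual c d = Dual (a * c) (a * d + b * c)" by (simp add: times_dual_def)
lemma dual_minus[simp]: "Dual a b - Dual c d = Dual (a - c) (b - d)" by (simp add: minus_dual_def)
lemma dual_uminus[simp]: "- Dual a b = Dual (- a) (- b)" by (simp add: uminus_dual_def)
lemma dual_zero: "(0::'a::comm_ring_1 dual) = Dual 0 0" by (simp add: zero_dual_def)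
lemma dual_one: "(1::'a::comm_ring_1 dual) = Dual 1 0" by (simp add: one_dual_def)
lemma dre_zero[simp]: "dre (0::'a::comm_ring_1 dual) = 0" by (simp add: zero_dual_def)
lemma deps_zero[simp]: "deps (0::'a::comm_ring_1 dual) = 0" by (simp add: zero_dual_def)
lemma dre_one[simp]: "dre (1::'a::comm_ring_1 dual) = 1" by (simp add: one_dual_def)
lemma dre_plus[simp]: "dre (x + y) = dre x + dre (y::'a::comm_ring_1 dual)" by (simp add: plus_dual_def)
lemma dre_times[simp]: "dre (x * y) = dre x * dre (y::'a::comm_ring_1 dual)" by (simp add: times_dual_def)

lemma dual_eps_times: "Dual 0 x * y = Dual 0 (x * dre (y::'a::comm_ring_1 dual))"
  by (cases y) simp

lemma Dual0_sum: "Dual 0 (sum f A) = (\<Sum>a\<in>A. Dual (0::'a::comm_ring_1) (f a))"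
proof (induction A rule: infinite_finite_induct)
  case (infinite A) then show ?case by (simp add: dual_zero)
next
  case empty then show ?case by (simp add: dual_zero)
next
  case (insert x F) then show ?case by (simp add: insert(3)[symmetric])
qed

lemma hom_dre: "is_ring_hom (dre :: 'a::comm_ring_1 dual \<Rightarrow> 'a)"
  by (simp add: is_ring_hom_def)

lemma hom_lift: "is_ring_hom (\<lambda>s::'a::comm_ring_1. Dual s 0)"
  by (simp add: is_ring_hom_def dual_one)

lemma hom_dual_base: "is_ring_hom \<phi> \<Longrightarrow> is_ring_hom (dual_base \<phi>)"
  by (simp add: is_ring_hom_def dual_base_def dual_one)

lemma hom_dual_map: assumes h: "is_ring_hom \<psi>" shows "is_ring_hom (dual_map \<psi>)"
  using h hom_0[OF h] by (simp add: is_ring_hom_def dual_map_def dual_one plus_dual_def times_dual_def)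

lemma dre_dual_base: "dre \<circ> dual_base \<phi> = \<phi>" by (simp add: dual_base_def comp_def)
lemma lift_dual_base: "(\<lambda>s. Dual s 0) \<circ> \<phi> = dual_base \<phi>" by (rule ext) (simp add: dual_base_def)
lemma dual_map_dual_base: "is_ring_hom \<psi> \<Longrightarrow> dual_map \<psi> \<circ> dual_base \<phi> = dual_base (\<psi> \<circ> \<phi>)"
  by (rule ext) (simp add: dual_base_def dual_map_def hom_0)

section \<open>The additive formal group\<close>

lemma add_in_mps: "(f::('a::comm_ring_1) mps) \<in> mps k \<Longrightarrow> g \<in> mps k \<Longrightarrow> mps_add f g \<in> mps k"
  by (auto simp: mps_def mps_add_def)

lemma add_cochain: "f \<in> cochains k \<Longrightarrow> g \<in> cochains k \<Longrightarrow> mps_add f g \<in> cochains k"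
  by (simp add: cochains_def mps_def mps_add_def)

lemma comp_Ga: assumes a: "a \<in> cochains k" and b: "b \<in> cochains k"
  shows "mps_comp k Ga [a, b] = mps_add a b"
proof -
  have o: "\<forall>h\<in>set [a,b]. ord_ge 1 h" using cochain_ord[OF a] cochain_ord[OF b] by simp
  have "mps_comp k (mps_var 2 0) [a,b] = a" using comp_var[of "[a,b]" 2 0 k] o cochain_mps[OF a] by simp
  moreover have "mps_comp k (mps_var 2 1) [a,b] = b" using comp_var[of "[a,b]" 2 1 k] o cochain_mps[OF b] by simp
  ultimately show ?thesis by (simp add: Ga_def comp_add_left)
qed

lemma fgl_Ga: "fgl (Ga :: ('a::comm_ring_1) mps)"
proof -
  have X: "mps_var 1 0 \<in> (cochains 1 :: 'a mps set)" by (rule var_cochain) simp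
  have V: "\<And>i. i < 3 \<Longrightarrow> mps_var 3 i \<in> (cochains 3 :: 'a mps set)" by (rule var_cochain)
  have Y2: "mps_var 2 1 \<in> (cochains 2 :: 'a mps set)" "mps_var 2 0 \<in> (cochains 2 :: 'a mps set)"
    by (simp_all add: var_cochain)
  have z: "mps_add (mps_var 1 0) mps_zero = (mps_var 1 0 :: 'a mps)" "mps_add mps_zero (mps_var 1 0) = (mps_var 1 0 :: 'a mps)"
    by (simp_all add: mps_add_def mps_zero_def)
  have "Ga \<in> (mps 2 :: 'a mps set)" by (simp add: Ga_def add_in_mps)
  moreover have "mps_comp 1 Ga [mps_var 1 0, mps_zero] = (mps_var 1 0 :: 'a mps)"
    using comp_Ga[OF X zero_cochain] z by simp
  moreover have "mps_comp 1 Ga [mps_zero, mps_var 1 0] = (mps_var 1 0 :: 'a mps)"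
    using comp_Ga[OF zero_cochain X] z by simp
  moreover have "mps_comp 2 Ga [mps_var 2 1, mps_var 2 0] = (Ga :: 'a mps)"
    using comp_Ga[OF Y2] by (simp add: Ga_def mps_add_def add.commute)
  moreover have "mps_comp 3 Ga [mps_comp 3 Ga [mps_var 3 0, mps_var 3 1], mps_var 3 2]
       = (mps_comp 3 Ga [mps_var 3 0, mps_comp 3 Ga [mps_var 3 1, mps_var 3 2]] :: 'a mps)"
  proof -
    have c: "mps_var 3 0 \<in> (cochains 3 :: 'a mps set)" "mps_var 3 1 \<in> (cochains 3 :: 'a mps set)" "mps_var 3 2 \<in> (cochains 3 :: 'a mps set)"
      by (simp_all add: V)
    show ?thesis using comp_Ga[OF c(1) c(2)] comp_Ga[OF c(2) c(3)] comp_Ga[OF add_cochain[OF c(1) c(2)] c(3)]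
        comp_Ga[OF c(1) add_cochain[OF c(2) c(3)]] by (simp add: mps_add_def add.assoc)
  qed
  ultimately show ?thesis by (simp add: fgl_def)
qed

definition mps_neg :: "('a::comm_ring_1) mps \<Rightarrow> 'a mps" where
  "mps_neg f = (\<lambda>e. - f e)"

lemma neg_cochain: "f \<in> cochains k \<Longrightarrow> mps_neg f \<in> cochains k"
  by (simp add: cochains_def mps_def mps_neg_def)

lemma cadd_Ga: "a \<in> cochains k \<Longrightarrow> b \<in> cochains k \<Longrightarrow> cadd Ga k a b = mps_add a b"
  by (simp add: cadd_def comp_Ga)

lemma cneg_Ga: assumes a: "a \<in> cochains k" shows "cneg Ga k a = mps_neg a"
proof -
  interpret GA: fglG Ga by (rule fglG.intro[OF fgl_Ga])
  interpret A: comm_group "cochain_group Ga k" by (rule GA.cochain_group_comm)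
  have n: "mps_neg a \<in> cochains k" by (rule neg_cochain[OF a])
  have z: "cadd Ga k (mps_neg a) a = mps_zero"
    using cadd_Ga[OF n a] by (simp add: mps_add_def mps_neg_def mps_zero_def)
  have "inv\<^bsub>cochain_group Ga k\<^esub> a = mps_neg a"
    by (rule A.inv_equality) (simp_all add: cochain_group_def a n z)
  then show ?thesis using fglG_inv_is_cneg[OF fgl_Ga a] by simp
qed


section \<open>The tangent embedding\<close>

definition eps :: "('a::comm_ring_1) mps \<Rightarrow> 'a dual mps" where
  "eps h = mps_map (Dual 0) h"

abbreviation lift :: "('a::comm_ring_1) mps \<Rightarrow> 'a dual mps" where
  "lift \<equiv> mps_map (\<lambda>s. Dual s 0)"

abbreviation red :: "('a::comm_ring_1) dual mps \<Rightarrow> 'a mps" where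
  "red \<equiv> mps_map dre"

lemma eps_cochain: "h \<in> cochains k \<Longrightarrow> eps h \<in> cochains k"
  by (simp add: cochains_def mps_def eps_def mps_map_def dual_zero)

lemma red_eps: "red (eps h) = mps_zero"
  by (rule ext) (simp add: eps_def mps_map_def mps_zero_def)

lemma eps_inj: "eps a = eps b \<Longrightarrow> a = b"
proof (rule ext)
  fix e assume "eps a = eps b"
  then have "eps a e = eps b e" by simp
  then show "a e = b e" by (simp add: eps_def mps_map_def)
qed

lemma red_zero_eps: "red x = mps_zero \<Longrightarrow> x = eps (mps_map deps x)"
proof (rule ext)
  fix e assume "red x = mps_zero"
  then have "dre (x e) = 0" by (metis mps_map_def mps_zero_def)
  then show "x e = eps (mps_map deps x) e" by (simp add: eps_def mps_map_def dual.expand)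
qed

lemma red_lift: "red (lift h) = h"
  by (rule ext) (simp add: mps_map_def)

lemma eps_add: "eps (mps_add a b) = mps_add (eps a) (eps b)"
  by (rule ext) (simp add: eps_def mps_map_def mps_add_def)

lemma eps_zero[simp]: "eps mps_zero = mps_zero"
  by (rule ext) (simp add: eps_def mps_map_def mps_zero_def dual_zero)

lemma deps_cochain: "x \<in> cochains k \<Longrightarrow> mps_map deps x \<in> cochains k"
  by (simp add: cochains_def mps_def mps_map_def)

lemma mult_zero_right[simp]: "mps_mult k f mps_zero = mps_zero"
  by (subst mps_mult_comm) simp

lemma mult_eps_left: "mps_mult k (eps a) B = eps (mps_mult k a (red B))"
proof (rule ext)
  fix e
  show "mps_mult k (eps a) B e = eps (mps_mult k a (red B)) e"
  proof (cases "length e = k")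
    case True
    have "mps_mult k (eps a) B e = (\<Sum>x\<in>divisors_exp e. Dual 0 (a x * dre (B (map2 (-) e x))))"
      using True by (simp add: mps_mult_def eps_def mps_map_def dual_eps_times)
    also have "\<dots> = eps (mps_mult k a (red B)) e"
      using True by (simp add: mps_mult_def eps_def mps_map_def Dual0_sum)
    finally show ?thesis .
  qed (simp add: mps_mult_def eps_def mps_map_def dual_zero)
qed

lemma mult_eps_eps: "mps_mult k (eps a) (eps b) = mps_zero"
  by (simp add: mult_eps_left red_eps)

lemma eps_mps: "a \<in> mps k \<Longrightarrow> eps a \<in> mps k"
  by (simp add: mps_def eps_def mps_map_def dual_zero)

lemma pow_eps: assumes "a \<in> mps k"
  shows "mps_pow k (eps a) x = (if x = 0 then mps_one k else if x = 1 then eps a else mps_zero)"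
proof (cases x)
  case 0 then show ?thesis by simp
next
  case (Suc y)
  show ?thesis
  proof (cases y)
    case 0 then show ?thesis using Suc eps_mps[OF assms] by (simp add: mps_pow_Suc mps_mult_one_right)
  next
    case (Suc z)
    have "mps_pow k (eps a) x = mps_mult k (eps a) (mps_mult k (eps a) (mps_pow k (eps a) z))"
      using Suc \<open>x = Suc y\<close> by (simp add: mps_pow_Suc)
    also have "\<dots> = mps_zero" by (simp add: mult_eps_left red_eps mult_eps_eps)
    finally show ?thesis using Suc \<open>x = Suc y\<close> by simp
  qed
qed

lemma comp_eps_lift: "mps_comp k (eps f) (map lift gs) = eps (mps_comp k f gs)"
proof (rule ext)
  fix e
  have P: "P k (map lift gs) d = lift (P k gs d)" for d
    using map_P[OF hom_lift, of k gs d] by simp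
  show "mps_comp k (eps f) (map lift gs) e = eps (mps_comp k f gs) e"
    by (simp add: mps_comp_P P eps_def mps_map_def Dual0_sum dual_zero)
qed

context fglG
begin

lemma P_Xz: "P 1 [X1, mps_zero] [a, b] c = (if b = 0 \<and> c = [a] then (1::'a) else 0)"
proof (cases b)
  case 0
  have "P 1 [X1, mps_zero] [a, b] = (mps_pow 1 (X1::'a mps) a)"
    using 0 by (simp add: mps_mult_one_left mps_mult_one_right)
  then show ?thesis using 0 X1_pow[of a c] by auto
next
  case (Suc b') then show ?thesis by (simp add: zero_pow_Suc) (simp add: mps_zero_def)
qed

lemma Gb0: "G [b, 0] = (if b = 1 then 1 else 0)"
proof -
  have o: "\<forall>h\<in>set [X1::'a mps, mps_zero]. ord_ge 1 h" using X1_ord by simp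
  have "mps_comp 1 G [X1, mps_zero] [b] = (\<Sum>d\<in>Bset 2 b. G d * P 1 [X1, mps_zero] d [b])"
    using comp_range[of "[b]" 1 "[X1::'a mps, mps_zero]" b G] o by (simp add: One_nat_def numeral_2_eq_2)
  also have "\<dots> = (\<Sum>d\<in>Bset 2 b. if d = [b, 0] then G d else 0)"
  proof (rule sum.cong[OF refl])
    fix d assume "d \<in> Bset 2 b"
    then obtain x y where d: "d = [x, y]" using Bset2 by blast
    show "G d * P 1 [X1, mps_zero] d [b] = (if d = [b, 0] then G d else 0)"
      unfolding d P_Xz by auto
  qed
  also have "\<dots> = G [b, 0]" by (subst sum.delta[OF finite_Bset]) (simp add: Bset_def)
  finally have "mps_comp 1 G [X1, mps_zero] [b] = G [b, 0]" .
  then show ?thesis using G_r0 by (simp add: mps_var_def One_nat_def)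
qed

end

lemma P_eps2: assumes a: "a \<in> mps k" and b: "b \<in> mps k"
  shows "P k [eps a, eps b] [x, y] = (if x = 0 \<and> y = 0 then mps_one k else if x = 1 \<and> y = 0 then eps a
     else if x = 0 \<and> y = 1 then eps b else mps_zero)"
  using eps_mps[OF a] eps_mps[OF b]
  by (simp add: pow_eps[OF a] pow_eps[OF b] mps_mult_one_left mps_mult_one_right mult_eps_eps)

lemma E1:
  assumes Gs: "fgl Gs" and a: "a \<in> cochains n" and b: "b \<in> cochains n"
  shows "cadd (lift Gs) n (eps a) (eps b) = eps (mps_add a b)"
proof (rule ext)
  interpret GS: fglG Gs by (rule fglG.intro[OF Gs])
  fix e
  show "cadd (lift Gs) n (eps a) (eps b) e = eps (mps_add a b) e"
  proof (cases "length e = n")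
    case False
    have "eps (mps_add a b) \<in> mps n" using eps_mps add_in_mps cochain_mps a b by blast
    then show ?thesis using False by (simp add: cadd_def comp_out mps_out)
  next
    case True
    define N where "N = sum_list e + 1"
    have o: "\<forall>h\<in>set [eps a, eps b]. ord_ge 1 h"
      using cochain_ord[OF eps_cochain[OF a]] cochain_ord[OF eps_cochain[OF b]] by simp
    have am: "a \<in> mps n" and bm: "b \<in> mps n" using a b by (simp_all add: cochain_mps)
    have "cadd (lift Gs) n (eps a) (eps b) e = (\<Sum>d\<in>Bset 2 N. lift Gs d * P n [eps a, eps b] d e)"
      using comp_range[of e n "[eps a, eps b]" N "lift Gs"] True o by (simp add: cadd_def N_def numeral_2_eq_2)
    also have "\<dots> = (\<Sum>d\<in>Bset 2 N. (if d = [1,0] then eps a e else 0) + (if d = [0,1] then eps b e else 0))"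
    proof (rule sum.cong[OF refl])
      fix d assume "d \<in> Bset 2 N"
      then obtain x y where d: "d = [x, y]" using Bset2 by blast
      have g00: "Gs [0,0] = 0" by (rule GS.G_const)
      have g10: "Gs [1,0] = 1" using GS.Gb0[of 1] by simp
      have g01: "Gs [0,1] = 1" using GS.G0b[of 1] by simp
      show "lift Gs d * P n [eps a, eps b] d e = (if d = [1,0] then eps a e else 0) + (if d = [0,1] then eps b e else 0)"
        unfolding d P_eps2[OF am bm]
        by (auto simp: mps_map_def g00 g10 g01 dual_zero[symmetric] dual_one[symmetric] mps_zero_def)
    qed
    also have "\<dots> = eps a e + eps b e"
    proof -
      have m: "[1,0] \<in> Bset 2 N" "[0,1] \<in> Bset 2 N" by (simp_all add: Bset_def N_def)
      show ?thesis by (simp only: sum.distrib sum.delta[OF finite_Bset] m if_True)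
    qed
    also have "\<dots> = eps (mps_add a b) e" by (simp only: eps_add) (simp add: mps_add_def)
    finally show ?thesis .
  qed
qed


section \<open>Coboundary of tangent cochains\<close>

lemma E2:
  assumes Gs: "fgl Gs" and a: "a \<in> cochains n"
  shows "cneg (lift Gs) n (eps a) = eps (mps_neg a)"
proof -
  have Gd: "fgl (lift Gs)" by (rule fgl_map[OF hom_lift Gs])
  interpret GD: fglG "lift Gs" by (rule fglG.intro[OF Gd])
  interpret A: comm_group "cochain_group (lift Gs) n" by (rule GD.cochain_group_comm)
  have na: "mps_neg a \<in> cochains n" by (rule neg_cochain[OF a])
  have z: "cadd (lift Gs) n (eps (mps_neg a)) (eps a) = mps_zero"
  proof -
    have "mps_add (mps_neg a) a = mps_zero" by (rule ext) (simp add: mps_add_def mps_neg_def mps_zero_def)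
    then show ?thesis using E1[OF Gs na a] by simp
  qed
  have "inv\<^bsub>cochain_group (lift Gs) n\<^esub> (eps a) = eps (mps_neg a)"
    by (rule A.inv_equality) (simp_all add: cochain_group_def z eps_cochain a na)
  then show ?thesis using fglG_inv_is_cneg[OF Gd eps_cochain[OF a]] by simp
qed

lemma E3: "face (lift Fs) n i (eps h) = eps (face Fs n i h)"
  unfolding face_def face_subst_map[OF hom_lift, symmetric] by (rule comp_eps_lift)

lemma E4:
  assumes Fs: "fgl Fs" and Gs: "fgl Gs" and h: "h \<in> cochains n"
  shows "coboundary (lift Fs) (lift Gs) n (eps h) = eps (coboundary Fs Ga n h)"
proof -
  interpret C: cob Fs Gs by (rule cob.intro[OF Fs Gs])
  define stD where "stD = (\<lambda>acc i. cadd (lift Gs) (n+1) acc (if even i then face (lift Fs) n i (eps h)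
      else cneg (lift Gs) (n+1) (face (lift Fs) n i (eps h))))"
  define stA where "stA = (\<lambda>acc i. cadd Ga (n+1) acc (if even i then face Fs n i h else cneg Ga (n+1) (face Fs n i h)))"
  have gen: "acc \<in> cochains (n+1) \<Longrightarrow> foldl stD (eps acc) L = eps (foldl stA acc L)" for acc L
  proof (induction L arbitrary: acc)
    case Nil then show ?case by simp
  next
    case (Cons i L)
    have t: "face Fs n i h \<in> cochains (n+1)" by (rule C.face_cochain[OF h])
    have u: "(if even i then face Fs n i h else cneg Ga (n+1) (face Fs n i h)) \<in> cochains (n+1)"
      using t neg_cochain[OF t] cneg_Ga[OF t] by simp
    have eu: "(if even i then face (lift Fs) n i (eps h) else cneg (lift Gs) (n+1) (face (lift Fs) n i (eps h)))
        = eps (if even i then face Fs n i h else cneg Ga (n+1) (face Fs n i h))"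
      by (simp add: E3 E2[OF Gs t] cneg_Ga[OF t])
    have step: "stD (eps acc) i = eps (stA acc i)"
      unfolding stD_def stA_def eu using E1[OF Gs Cons.prems u] cadd_Ga[OF Cons.prems u] by simp
    have a': "stA acc i \<in> cochains (n+1)"
      unfolding stA_def using cadd_Ga[OF Cons.prems u] add_cochain[OF Cons.prems u] by simp
    show ?case using Cons.IH[OF a'] step by simp
  qed
  from gen[OF zero_cochain, of "[0..<n+2]"]
  have key: "foldl stD mps_zero [0..<n+2] = eps (foldl stA mps_zero [0..<n+2])" by simp
  show ?thesis unfolding coboundary_def using key unfolding stD_def stA_def .
qed

section \<open>Cohomology as cosets\<close>

context cob
begin

lemma cob_subgroup: "subgroup (coboundaries F G n) (cochain_group G n)"
proof (cases n)
  case 0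
  interpret A: comm_group "cochain_group G n" by (rule G.cochain_group_comm)
  show ?thesis using A.triv_subgroup 0 by (simp add: coboundaries_def cochain_group_def)
next
  case (Suc m)
  interpret A: comm_group "cochain_group G m" by (rule G.cochain_group_comm)
  interpret B: comm_group "cochain_group G n" by (rule G.cochain_group_comm)
  have gh: "group_hom (cochain_group G m) (cochain_group G n) (coboundary F G m)"
    by (rule group_hom.intro[OF A.is_group B.is_group]) (use coboundary_hom[of m] Suc in \<open>simp add: group_hom_axioms_def Suc_eq_plus1\<close>)
  show ?thesis using group_hom.img_is_subgroup[OF gh] Suc by (simp add: coboundaries_def cochain_group_def)
qed

lemma cob_normal: "normal (coboundaries F G n) (cochain_group G n)"
proof -
  interpret B: comm_group "cochain_group G n" by (rule G.cochain_group_comm)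
  show ?thesis by (rule B.subgroup_imp_normal[OF cob_subgroup])
qed

lemma cocycles_sub: "cocycles F G n \<subseteq> cochains n"
  by (auto simp: cocycles_def)

lemma rcos_cocyc: "B #>\<^bsub>cocycle_group F G n\<^esub> a = B #>\<^bsub>cochain_group G n\<^esub> a"
  by (simp add: r_coset_def cocycle_group_def cochain_group_def)

lemma setmult_cocyc: "set_mult (cocycle_group F G n) XX YY = set_mult (cochain_group G n) XX YY"
  by (simp add: set_mult_def cocycle_group_def cochain_group_def)

lemma cohom_carrier: "carrier (cohom F G n) = (\<lambda>a. coboundaries F G n #>\<^bsub>cochain_group G n\<^esub> a) ` cocycles F G n"
proof -
  have c: "carrier (cocycle_group F G n) = cocycles F G n" by (simp add: cocycle_group_def)
  have "carrier (cohom F G n) = (\<Union>a\<in>carrier (cocycle_group F G n). {coboundaries F G n #>\<^bsub>cocycle_group F G n\<^esub> a})"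
    by (simp add: cohom_def FactGroup_def RCOSETS_def)
  then show ?thesis unfolding c rcos_cocyc by auto
qed

lemma cohom_mult: "monoid.mult (cohom F G n) XX YY = set_mult (cochain_group G n) XX YY"
  by (simp add: cohom_def FactGroup_def setmult_cocyc)

lemma cohom_one: "monoid.one (cohom F G n) = coboundaries F G n"
  by (simp add: cohom_def FactGroup_def)

lemma cohom_class_eq: "cohom_class F G n f = coboundaries F G n #>\<^bsub>cochain_group G n\<^esub> f"
  by (simp add: cohom_class_def rcos_cocyc)

lemma cocycle_cadd: "a \<in> cocycles F G n \<Longrightarrow> b \<in> cocycles F G n \<Longrightarrow> cadd G n a b \<in> cocycles F G n"
  by (simp add: cocycles_def cob_cadd G.cadd_closed G.cadd_l0 zero_cochain)

lemma coboundaries_sub: "coboundaries F G n \<subseteq> cochains n"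
  using subgroup.subset[OF cob_subgroup] by (simp add: cochain_group_def)

end


lemma (in group) some_rcos: "subgroup B G \<Longrightarrow> a \<in> carrier G \<Longrightarrow> (SOME x. x \<in> B #> a) \<in> B #> a"
  by (rule someI[of _ a]) (rule rcos_self)

lemma rcosE: "x \<in> B #>\<^bsub>A\<^esub> a \<Longrightarrow> \<exists>b\<in>B. x = b \<otimes>\<^bsub>A\<^esub> a"
  by (auto simp: r_coset_def)

lemma (in group) rcos_absorb: "subgroup B G \<Longrightarrow> b \<in> B \<Longrightarrow> a \<in> carrier G \<Longrightarrow> B #> (b \<otimes> a) = B #> a"
  by (metis rcosI repr_independence subgroup.subset)

lemma (in group) rcos_eq_imp: assumes "subgroup B G" "a \<in> carrier G" "a' \<in> carrier G" "B #> a = B #> a'"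
  shows "a \<otimes> inv a' \<in> B"
proof -
  have "a \<in> B #> a'" using assms rcos_self by metis
  then show ?thesis using subgroup.rcos_module_imp[OF assms(1) is_group assms(3)] by blast
qed

lemma (in group) rcos_eq_intro: assumes "subgroup B G" "a \<in> carrier G" "a' \<in> carrier G" "a \<otimes> inv a' \<in> B"
  shows "B #> a = B #> a'"
proof -
  have "a \<in> B #> a'" using subgroup.rcos_module_rev[OF assms(1) is_group assms(3) assms(2) assms(4)] .
  then show ?thesis using repr_independence[OF _ assms(3) assms(1)] by metis
qed

lemma (in group) rcos_eqB_imp: assumes "subgroup B G" "a \<in> carrier G" "B #> a = B"
  shows "a \<in> B"
  using rcos_self[OF assms(2) assms(1)] assms(3) by simp

locale mainctx =
  fixes \<phi> :: "'r::comm_ring_1 \<Rightarrow> 's::comm_ring_1" and F G :: "'r mps"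
  assumes h\<phi>: "is_ring_hom \<phi>" and fF: "fgl F" and fG: "fgl G"
begin

abbreviation "Fs \<equiv> mps_map \<phi> F"
abbreviation "Gs \<equiv> mps_map \<phi> G"

lemma fFs: "fgl Fs" by (rule fgl_map[OF h\<phi> fF])
lemma fGs: "fgl Gs" by (rule fgl_map[OF h\<phi> fG])
lemma fFd: "fgl (lift Fs)" by (rule fgl_map[OF hom_lift fFs])
lemma fGd: "fgl (lift Gs)" by (rule fgl_map[OF hom_lift fGs])

lemma Fd_eq: "mps_map (dual_base \<phi>) F = lift Fs"
  by (simp add: map_map lift_dual_base)
lemma Gd_eq: "mps_map (dual_base \<phi>) G = lift Gs"
  by (simp add: map_map lift_dual_base)

sublocale CS: cob Fs Gs by (rule cob.intro[OF fFs fGs])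
sublocale CD: cob "lift Fs" "lift Gs" by (rule cob.intro[OF fFd fGd])
sublocale CA: cob Fs Ga by (rule cob.intro[OF fFs fgl_Ga])

lemma red_cadd: "red (cadd (lift Gs) m x y) = cadd Gs m (red x) (red y)"
  using cadd_map[OF hom_dre, of "lift Gs" m x y] by (simp add: red_lift)

lemma red_cneg: "x \<in> cochains m \<Longrightarrow> red (cneg (lift Gs) m x) = cneg Gs m (red x)"
  using cneg_map[OF fGd hom_dre] by (simp add: red_lift)

lemma red_cob: "x \<in> cochains m \<Longrightarrow> red (coboundary (lift Fs) (lift Gs) m x) = coboundary Fs Gs m (red x)"
  using coboundary_map[OF fFd fGd hom_dre] by (simp add: red_lift)

lemma red_cochain: "x \<in> cochains m \<Longrightarrow> red x \<in> cochains m"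
  by (rule map_cochains[OF hom_dre])

lemma lift_cochain: "x \<in> cochains m \<Longrightarrow> lift x \<in> cochains m"
  by (rule map_cochains[OF hom_lift])

lemma lift_cob: "x \<in> cochains m \<Longrightarrow> lift (coboundary Fs Gs m x) = coboundary (lift Fs) (lift Gs) m (lift x)"
  by (rule coboundary_map[OF fFs fGs hom_lift])

lemma lift_zero: "lift mps_zero = (mps_zero :: 's dual mps)"
  by (rule map_zero[OF hom_lift])

lemma red_zero: "red (mps_zero :: 's dual mps) = mps_zero"
  by (rule map_zero[OF hom_dre])

lemma eps_BA: assumes b: "b \<in> coboundaries Fs Ga n" shows "eps b \<in> coboundaries (lift Fs) (lift Gs) n"
proof (cases n)
  case 0 then show ?thesis using b by (simp add: coboundaries_def)
next
  case (Suc m)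
  then obtain y where y: "y \<in> cochains m" "b = coboundary Fs Ga m y" using b by (auto simp: coboundaries_def)
  then have "eps b = coboundary (lift Fs) (lift Gs) m (eps y)" using E4[OF fFs fGs y(1)] by simp
  then show ?thesis using Suc eps_cochain[OF y(1)] by (auto simp: coboundaries_def)
qed

lemma red_BD: assumes b: "b \<in> coboundaries (lift Fs) (lift Gs) n" shows "red b \<in> coboundaries Fs Gs n"
proof (cases n)
  case 0 then show ?thesis using b red_zero by (simp add: coboundaries_def)
next
  case (Suc m)
  then obtain y where y: "y \<in> cochains m" "b = coboundary (lift Fs) (lift Gs) m y" using b by (auto simp: coboundaries_def)
  then have "red b = coboundary Fs Gs m (red y)" using red_cob by simp
  then show ?thesis using Suc red_cochain[OF y(1)] by (auto simp: coboundaries_def)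
qed

lemma lift_BS: assumes b: "b \<in> coboundaries Fs Gs n" shows "lift b \<in> coboundaries (lift Fs) (lift Gs) n"
proof (cases n)
  case 0 then show ?thesis using b lift_zero by (simp add: coboundaries_def)
next
  case (Suc m)
  then obtain y where y: "y \<in> cochains m" "b = coboundary Fs Gs m y" using b by (auto simp: coboundaries_def)
  then have "lift b = coboundary (lift Fs) (lift Gs) m (lift y)" using lift_cob by simp
  then show ?thesis using Suc lift_cochain[OF y(1)] by (auto simp: coboundaries_def)
qed

lemma eps_cocycle: "h \<in> cocycles Fs Ga n \<Longrightarrow> eps h \<in> cocycles (lift Fs) (lift Gs) n"
  using E4[OF fFs fGs] eps_cochain by (auto simp: cocycles_def)


abbreviation "AD m \<equiv> cochain_group (lift Gs) m"
abbreviation "AS m \<equiv> cochain_group Gs m"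
abbreviation "AA m \<equiv> cochain_group (Ga :: 's mps) m"
abbreviation "BD m \<equiv> coboundaries (lift Fs) (lift Gs) m"
abbreviation "BS m \<equiv> coboundaries Fs Gs m"
abbreviation "BA m \<equiv> coboundaries Fs (Ga :: 's mps) m"

lemma grpD: "comm_group (AD m)" by (rule CD.G.cochain_group_comm)
lemma grpS: "comm_group (AS m)" by (rule CS.G.cochain_group_comm)
lemma grpA: "comm_group (AA m)" by (rule CA.G.cochain_group_comm)

lemma carrier_cg: "carrier (cochain_group G' m) = cochains m" by (simp add: cochain_group_def)
lemma mult_cg: "x \<otimes>\<^bsub>cochain_group G' m\<^esub> y = cadd G' m x y" by (simp add: cochain_group_def)
lemma one_cg: "\<one>\<^bsub>cochain_group G' m\<^esub> = mps_zero" by (simp add: cochain_group_def)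

lemma tau_coset:
  assumes h: "h \<in> cocycles Fs Ga n"
  shows "tangent_comparison \<phi> F G n (BA n #>\<^bsub>AA n\<^esub> h) = BD n #>\<^bsub>AD n\<^esub> eps h"
proof -
  interpret A: comm_group "AA n" by (rule grpA)
  interpret D: comm_group "AD n" by (rule grpD)
  have hc: "h \<in> cochains n" using h CA.cocycles_sub by blast
  define h' where "h' = (SOME x. x \<in> BA n #>\<^bsub>AA n\<^esub> h)"
  have "h' \<in> BA n #>\<^bsub>AA n\<^esub> h" unfolding h'_def by (rule A.some_rcos[OF CA.cob_subgroup]) (simp add: carrier_cg hc)
  then obtain b where b: "b \<in> BA n" "h' = cadd Ga n b h" using rcosE mult_cg by metis
  have bc: "b \<in> cochains n" using b(1) CA.coboundaries_sub by blast
  have "eps h' = cadd (lift Gs) n (eps b) (eps h)"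
    using b(2) cadd_Ga[OF bc hc] E1[OF fGs bc hc] by simp
  then have e: "eps h' = eps b \<otimes>\<^bsub>AD n\<^esub> eps h" by (simp add: mult_cg)
  have "tangent_comparison \<phi> F G n (BA n #>\<^bsub>AA n\<^esub> h) = BD n #>\<^bsub>AD n\<^esub> eps h'"
    unfolding tangent_comparison_def Fd_eq Gd_eq CD.cohom_class_eq h'_def eps_def by simp
  also have "\<dots> = BD n #>\<^bsub>AD n\<^esub> eps h"
    unfolding e by (rule D.rcos_absorb[OF CD.cob_subgroup eps_BA[OF b(1)]]) (simp add: carrier_cg eps_cochain hc)
  finally show ?thesis .
qed

lemma cohom_map_coset:
  assumes g: "g \<in> cochains n"
  shows "cohom_map dre Fs Gs n (BD n #>\<^bsub>AD n\<^esub> g) = BS n #>\<^bsub>AS n\<^esub> red g"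
proof -
  interpret S: comm_group "AS n" by (rule grpS)
  interpret D: comm_group "AD n" by (rule grpD)
  define f where "f = (SOME x. x \<in> BD n #>\<^bsub>AD n\<^esub> g)"
  have "f \<in> BD n #>\<^bsub>AD n\<^esub> g" unfolding f_def by (rule D.some_rcos[OF CD.cob_subgroup]) (simp add: carrier_cg g)
  then obtain b where b: "b \<in> BD n" "f = cadd (lift Gs) n b g" using rcosE mult_cg by metis
  have "red f = cadd Gs n (red b) (red g)" using b(2) red_cadd by simp
  then have e: "red f = red b \<otimes>\<^bsub>AS n\<^esub> red g" by (simp add: mult_cg)
  have "cohom_map dre Fs Gs n (BD n #>\<^bsub>AD n\<^esub> g) = BS n #>\<^bsub>AS n\<^esub> red f"
    unfolding cohom_map_def CS.cohom_class_eq f_def by simp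
  also have "\<dots> = BS n #>\<^bsub>AS n\<^esub> red g"
    unfolding e by (rule S.rcos_absorb[OF CS.cob_subgroup red_BD[OF b(1)]]) (simp add: carrier_cg red_cochain g)
  finally show ?thesis .
qed

lemma tangent_carrier:
  "carrier (tangent_cohom \<phi> F G n) = {C \<in> carrier (cohom (lift Fs) (lift Gs) n). cohom_map dre Fs Gs n C = BS n}"
  by (simp add: tangent_cohom_def cohomR_def Fd_eq Gd_eq CS.cohom_one)

lemma tangent_mult:
  "monoid.mult (tangent_cohom \<phi> F G n) XX YY = set_mult (AD n) XX YY"
  by (simp add: tangent_cohom_def cohomR_def Fd_eq Gd_eq CD.cohom_mult)

lemma coset_in_T:
  assumes g: "g \<in> cocycles (lift Fs) (lift Gs) n" and r: "red g \<in> BS n"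
  shows "BD n #>\<^bsub>AD n\<^esub> g \<in> carrier (tangent_cohom \<phi> F G n)"
proof -
  interpret S: comm_group "AS n" by (rule grpS)
  have gc: "g \<in> cochains n" using g CD.cocycles_sub by blast
  have "BS n #>\<^bsub>AS n\<^esub> red g = BS n"
    by (rule S.coset_join2) (simp_all add: carrier_cg red_cochain gc CS.cob_subgroup r)
  then show ?thesis unfolding tangent_carrier using g CD.cohom_carrier cohom_map_coset[OF gc] by auto
qed


lemma HS_carrier: "carrier (cohom_Ga \<phi> F n) = (\<lambda>a. BA n #>\<^bsub>AA n\<^esub> a) ` cocycles Fs Ga n"
  by (simp add: cohom_Ga_def CA.cohom_carrier)

lemma HS_mult: "monoid.mult (cohom_Ga \<phi> F n) XX YY = set_mult (AA n) XX YY"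
  by (simp add: cohom_Ga_def CA.cohom_mult)

lemma red_eps_in_BS: "red (eps h) \<in> BS n"
proof -
  interpret S: comm_group "AS n" by (rule grpS)
  have "\<one>\<^bsub>AS n\<^esub> \<in> BS n" by (rule subgroup.one_closed[OF CS.cob_subgroup])
  then show ?thesis by (simp add: red_eps one_cg)
qed

lemma tau_hom: "tangent_comparison \<phi> F G n \<in> hom (cohom_Ga \<phi> F n) (tangent_cohom \<phi> F G n)"
proof (rule homI)
  fix C assume "C \<in> carrier (cohom_Ga \<phi> F n)"
  then obtain h where h: "h \<in> cocycles Fs Ga n" "C = BA n #>\<^bsub>AA n\<^esub> h" by (auto simp: HS_carrier)
  show "tangent_comparison \<phi> F G n C \<in> carrier (tangent_cohom \<phi> F G n)"
    using h tau_coset coset_in_T[OF eps_cocycle[OF h(1)] red_eps_in_BS] by simp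
next
  interpret A: comm_group "AA n" by (rule grpA)
  interpret D: comm_group "AD n" by (rule grpD)
  fix C D assume "C \<in> carrier (cohom_Ga \<phi> F n)" "D \<in> carrier (cohom_Ga \<phi> F n)"
  then obtain h1 h2 where h: "h1 \<in> cocycles Fs Ga n" "C = BA n #>\<^bsub>AA n\<^esub> h1"
      "h2 \<in> cocycles Fs Ga n" "D = BA n #>\<^bsub>AA n\<^esub> h2" by (auto simp: HS_carrier)
  have c1: "h1 \<in> cochains n" and c2: "h2 \<in> cochains n" using h CA.cocycles_sub by blast+
  have "monoid.mult (cohom_Ga \<phi> F n) C D = BA n #>\<^bsub>AA n\<^esub> (h1 \<otimes>\<^bsub>AA n\<^esub> h2)"
    unfolding HS_mult h(2,4) by (rule normal.rcos_sum[OF CA.cob_normal]) (simp_all add: carrier_cg c1 c2)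
  also have "h1 \<otimes>\<^bsub>AA n\<^esub> h2 = cadd Ga n h1 h2" by (simp add: mult_cg)
  finally have CD: "monoid.mult (cohom_Ga \<phi> F n) C D = BA n #>\<^bsub>AA n\<^esub> cadd Ga n h1 h2" .
  have z: "cadd Ga n h1 h2 \<in> cocycles Fs Ga n" by (rule CA.cocycle_cadd[OF h(1) h(3)])
  have e: "eps (cadd Ga n h1 h2) = eps h1 \<otimes>\<^bsub>AD n\<^esub> eps h2"
    using cadd_Ga[OF c1 c2] E1[OF fGs c1 c2] by (simp add: mult_cg)
  show "tangent_comparison \<phi> F G n (monoid.mult (cohom_Ga \<phi> F n) C D) =
        monoid.mult (tangent_cohom \<phi> F G n) (tangent_comparison \<phi> F G n C) (tangent_comparison \<phi> F G n D)"
  proof -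
    have "tangent_comparison \<phi> F G n (monoid.mult (cohom_Ga \<phi> F n) C D) = BD n #>\<^bsub>AD n\<^esub> eps (cadd Ga n h1 h2)"
      by (simp only: CD tau_coset[OF z])
    also have "\<dots> = BD n #>\<^bsub>AD n\<^esub> (eps h1 \<otimes>\<^bsub>AD n\<^esub> eps h2)" by (simp only: e)
    also have "\<dots> = set_mult (AD n) (BD n #>\<^bsub>AD n\<^esub> eps h1) (BD n #>\<^bsub>AD n\<^esub> eps h2)"
      by (rule normal.rcos_sum[OF CD.cob_normal, symmetric]) (simp_all add: carrier_cg eps_cochain c1 c2)
    also have "\<dots> = monoid.mult (tangent_cohom \<phi> F G n) (tangent_comparison \<phi> F G n C) (tangent_comparison \<phi> F G n D)"
      by (simp only: tangent_mult h(2,4) tau_coset[OF h(1)] tau_coset[OF h(3)])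
    finally show ?thesis .
  qed
qed

end


context mainctx
begin

lemma invD: "x \<in> cochains m \<Longrightarrow> inv\<^bsub>AD m\<^esub> x = cneg (lift Gs) m x"
  by (rule fglG_inv_is_cneg[OF fGd])

lemma invA: assumes x: "x \<in> cochains m" shows "inv\<^bsub>AA m\<^esub> x = mps_neg x"
  using fglG_inv_is_cneg[OF fgl_Ga x] cneg_Ga[OF x] by simp

lemma decomp_red0:
  assumes x: "x \<in> cochains m" and x0: "x0 = red x"
  shows "\<exists>k\<in>cochains m. eps k = inv\<^bsub>AD m\<^esub> (lift x0) \<otimes>\<^bsub>AD m\<^esub> x"
proof -
  interpret Dm: comm_group "AD m" by (rule grpD)
  have x0c: "x0 \<in> cochains m" using x0 red_cochain[OF x] by simp
  have lc: "lift x0 \<in> cochains m" by (rule lift_cochain[OF x0c])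
  define z where "z = inv\<^bsub>AD m\<^esub> (lift x0) \<otimes>\<^bsub>AD m\<^esub> x"
  have "z \<in> carrier (AD m)" unfolding z_def by (intro Dm.m_closed Dm.inv_closed) (simp_all add: carrier_cg lc x)
  then have zc: "z \<in> cochains m" by (simp add: carrier_cg)
  have ic: "cneg (lift Gs) m (lift x0) \<in> cochains m" by (rule CD.G.cneg_cochain[OF lc])
  have "red z = cadd Gs m (red (cneg (lift Gs) m (lift x0))) (red x)"
    unfolding z_def invD[OF lc] mult_cg by (rule red_cadd)
  also have "\<dots> = cadd Gs m (cneg Gs m x0) x0"
    using red_cneg[OF lc] x0 by (simp add: red_lift)
  also have "\<dots> = mps_zero"
    using CS.G.cadd_cneg[OF x0c] CS.G.cadd_comm[OF x0c CS.G.cneg_cochain[OF x0c]] by simp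
  finally have "z = eps (mps_map deps z)" by (rule red_zero_eps)
  then show ?thesis using deps_cochain[OF zc] unfolding z_def by metis
qed

lemma eps_BD_imp:
  assumes w: "w \<in> cochains n" and ew: "eps w \<in> BD n"
  shows "w \<in> BA n"
proof (cases n)
  case 0
  then have "eps w = eps mps_zero" using ew by (simp add: coboundaries_def)
  then have "w = mps_zero" by (rule eps_inj)
  then show ?thesis using 0 by (simp add: coboundaries_def)
next
  case (Suc m)
  interpret Dm: comm_group "AD m" by (rule grpD)
  obtain x where x: "x \<in> cochains m" "eps w = coboundary (lift Fs) (lift Gs) m x"
    using ew Suc by (auto simp: coboundaries_def)
  define x0 where "x0 = red x"
  have x0c: "x0 \<in> cochains m" unfolding x0_def by (rule red_cochain[OF x(1)])
  have dx0: "coboundary Fs Gs m x0 = mps_zero"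
    unfolding x0_def red_cob[OF x(1), symmetric] x(2)[symmetric] by (rule red_eps)
  obtain k where k: "k \<in> cochains m" "eps k = inv\<^bsub>AD m\<^esub> (lift x0) \<otimes>\<^bsub>AD m\<^esub> x"
    using decomp_red0[OF x(1) x0_def] by blast
  have lc: "lift x0 \<in> carrier (AD m)" using lift_cochain[OF x0c] by (simp add: carrier_cg)
  have xc: "x \<in> carrier (AD m)" using x(1) by (simp add: carrier_cg)
  have xe: "x = lift x0 \<otimes>\<^bsub>AD m\<^esub> eps k"
    unfolding k(2) using lc xc by (simp add: Dm.m_assoc[symmetric])
  have "coboundary (lift Fs) (lift Gs) m x = cadd (lift Gs) (m+1) (coboundary (lift Fs) (lift Gs) m (lift x0)) (coboundary (lift Fs) (lift Gs) m (eps k))"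
    unfolding xe mult_cg by (rule CD.cob_cadd) (simp_all add: lift_cochain[OF x0c] eps_cochain[OF k(1)])
  also have "coboundary (lift Fs) (lift Gs) m (lift x0) = mps_zero"
    using lift_cob[OF x0c] dx0 lift_zero by simp
  also have "coboundary (lift Fs) (lift Gs) m (eps k) = eps (coboundary Fs Ga m k)"
    by (rule E4[OF fFs fGs k(1)])
  also have "cadd (lift Gs) (m+1) mps_zero (eps (coboundary Fs Ga m k)) = eps (coboundary Fs Ga m k)"
    by (rule CD.G.cadd_l0) (rule eps_cochain[OF CA.cob_carrier[OF k(1)]])
  finally have "eps w = eps (coboundary Fs Ga m k)" using x(2) by simp
  then have "w = coboundary Fs Ga m k" by (rule eps_inj)
  then show ?thesis using Suc k(1) by (auto simp: coboundaries_def)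
qed

lemma tau_inj: "inj_on (tangent_comparison \<phi> F G n) (carrier (cohom_Ga \<phi> F n))"
proof (rule inj_onI)
  interpret A: comm_group "AA n" by (rule grpA)
  interpret D: comm_group "AD n" by (rule grpD)
  fix C D assume "C \<in> carrier (cohom_Ga \<phi> F n)" "D \<in> carrier (cohom_Ga \<phi> F n)"
    and eq: "tangent_comparison \<phi> F G n C = tangent_comparison \<phi> F G n D"
  then obtain h1 h2 where h: "h1 \<in> cocycles Fs Ga n" "C = BA n #>\<^bsub>AA n\<^esub> h1"
      "h2 \<in> cocycles Fs Ga n" "D = BA n #>\<^bsub>AA n\<^esub> h2" by (auto simp: HS_carrier)
  have c1: "h1 \<in> cochains n" and c2: "h2 \<in> cochains n" using h CA.cocycles_sub by blast+
  have n2: "mps_neg h2 \<in> cochains n" by (rule neg_cochain[OF c2])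
  have "BD n #>\<^bsub>AD n\<^esub> eps h1 = BD n #>\<^bsub>AD n\<^esub> eps h2"
    using eq h tau_coset by simp
  then have "eps h1 \<otimes>\<^bsub>AD n\<^esub> inv\<^bsub>AD n\<^esub> eps h2 \<in> BD n"
    by (rule D.rcos_eq_imp[OF CD.cob_subgroup, rotated 2]) (simp_all add: carrier_cg eps_cochain c1 c2)
  moreover have "eps h1 \<otimes>\<^bsub>AD n\<^esub> inv\<^bsub>AD n\<^esub> eps h2 = eps (mps_add h1 (mps_neg h2))"
    using invD[OF eps_cochain[OF c2]] E2[OF fGs c2] E1[OF fGs c1 n2] by (simp add: mult_cg)
  ultimately have "mps_add h1 (mps_neg h2) \<in> BA n"
    by (intro eps_BD_imp) (simp_all add: add_cochain c1 n2)
  moreover have "h1 \<otimes>\<^bsub>AA n\<^esub> inv\<^bsub>AA n\<^esub> h2 = mps_add h1 (mps_neg h2)"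
    using invA[OF c2] cadd_Ga[OF c1 n2] by (simp add: mult_cg)
  ultimately have "BA n #>\<^bsub>AA n\<^esub> h1 = BA n #>\<^bsub>AA n\<^esub> h2"
    by (intro A.rcos_eq_intro[OF CA.cob_subgroup]) (simp_all add: carrier_cg c1 c2)
  then show "C = D" using h by simp
qed


lemma tau_surj: "carrier (tangent_cohom \<phi> F G n) \<subseteq> tangent_comparison \<phi> F G n ` carrier (cohom_Ga \<phi> F n)"
proof
  interpret D: comm_group "AD n" by (rule grpD)
  interpret S: comm_group "AS n" by (rule grpS)
  fix C assume C: "C \<in> carrier (tangent_cohom \<phi> F G n)"
  then have C1: "C \<in> carrier (cohom (lift Fs) (lift Gs) n)" and C2: "cohom_map dre Fs Gs n C = BS n"
    by (simp_all add: tangent_carrier)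
  obtain g where g: "g \<in> cocycles (lift Fs) (lift Gs) n" "C = BD n #>\<^bsub>AD n\<^esub> g"
    using C1 CD.cohom_carrier by auto
  have gc: "g \<in> cochains n" using g(1) CD.cocycles_sub by blast
  have dg: "coboundary (lift Fs) (lift Gs) n g = mps_zero" using g(1) by (simp add: cocycles_def)
  define g0 where "g0 = red g"
  have g0c: "g0 \<in> cochains n" unfolding g0_def by (rule red_cochain[OF gc])
  have "BS n #>\<^bsub>AS n\<^esub> g0 = BS n" using C2 cohom_map_coset[OF gc] g g0_def by simp
  then have g0B: "g0 \<in> BS n" by (rule S.rcos_eqB_imp[OF CS.cob_subgroup, rotated]) (simp add: carrier_cg g0c)
  define z where "z = lift g0"
  have zB: "z \<in> BD n" unfolding z_def by (rule lift_BS[OF g0B])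
  have zc: "z \<in> cochains n" unfolding z_def by (rule lift_cochain[OF g0c])
  obtain k where k: "k \<in> cochains n" "eps k = inv\<^bsub>AD n\<^esub> z \<otimes>\<^bsub>AD n\<^esub> g"
    using decomp_red0[OF gc g0_def] unfolding z_def by blast
  have izB: "inv\<^bsub>AD n\<^esub> z \<in> BD n" by (rule subgroup.m_inv_closed[OF CD.cob_subgroup zB])
  have Ceq: "C = BD n #>\<^bsub>AD n\<^esub> eps k"
    unfolding g(2) k(2) by (rule D.rcos_absorb[OF CD.cob_subgroup izB, symmetric]) (simp add: carrier_cg gc)
  have dz: "coboundary (lift Fs) (lift Gs) n z = mps_zero"
  proof -
    have "coboundary Fs Gs n g0 = red (coboundary (lift Fs) (lift Gs) n g)"
      unfolding g0_def by (rule red_cob[OF gc, symmetric])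
    also have "\<dots> = mps_zero" using dg red_zero by simp
    finally show ?thesis unfolding z_def using lift_cob[OF g0c] lift_zero by simp
  qed
  have izc: "inv\<^bsub>AD n\<^esub> z \<in> cochains n" using D.inv_closed[of z] zc by (simp add: carrier_cg)
  have "eps (coboundary Fs Ga n k) = coboundary (lift Fs) (lift Gs) n (eps k)" by (rule E4[OF fFs fGs k(1), symmetric])
  also have "\<dots> = cadd (lift Gs) (n+1) (coboundary (lift Fs) (lift Gs) n (inv\<^bsub>AD n\<^esub> z)) (coboundary (lift Fs) (lift Gs) n g)"
    unfolding k(2) mult_cg by (rule CD.cob_cadd[OF izc gc])
  also have "coboundary (lift Fs) (lift Gs) n (inv\<^bsub>AD n\<^esub> z) = mps_zero"
  proof -
    interpret D1: comm_group "AD (n+1)" by (rule grpD)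
    have cz: "cneg (lift Gs) (n+1) mps_zero = mps_zero"
      using D1.inv_one fglG_inv_is_cneg[OF fGd zero_cochain, of "n+1"] by (simp add: one_cg)
    show ?thesis using invD[OF zc] CD.cob_cneg[OF zc] dz cz by simp
  qed
  also have "cadd (lift Gs) (n+1) mps_zero (coboundary (lift Fs) (lift Gs) n g) = mps_zero"
    using dg CD.G.cadd_l0[OF zero_cochain] by simp
  finally have "eps (coboundary Fs Ga n k) = eps mps_zero" by simp
  then have "coboundary Fs Ga n k = mps_zero" by (rule eps_inj)
  then have kz: "k \<in> cocycles Fs Ga n" using k(1) by (simp add: cocycles_def)
  have "BA n #>\<^bsub>AA n\<^esub> k \<in> carrier (cohom_Ga \<phi> F n)" using kz by (simp add: HS_carrier)
  moreover have "tangent_comparison \<phi> F G n (BA n #>\<^bsub>AA n\<^esub> k) = C" using tau_coset[OF kz] Ceq by simp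
  ultimately show "C \<in> tangent_comparison \<phi> F G n ` carrier (cohom_Ga \<phi> F n)" by force
qed

lemma tau_iso: "tangent_comparison \<phi> F G n \<in> iso (cohom_Ga \<phi> F n) (tangent_cohom \<phi> F G n)"
proof -
  have "tangent_comparison \<phi> F G n ` carrier (cohom_Ga \<phi> F n) \<subseteq> carrier (tangent_cohom \<phi> F G n)"
    using hom_in_carrier[OF tau_hom] by blast
  then have "tangent_comparison \<phi> F G n ` carrier (cohom_Ga \<phi> F n) = carrier (tangent_cohom \<phi> F G n)"
    using tau_surj[of n] by (rule equalityI)
  then have "bij_betw (tangent_comparison \<phi> F G n) (carrier (cohom_Ga \<phi> F n)) (carrier (tangent_cohom \<phi> F G n))"
    using tau_inj[of n] by (simp add: bij_betw_def)
  then show ?thesis using tau_hom by (simp add: iso_def)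
qed

end


lemma hom_comp: "is_ring_hom \<psi> \<Longrightarrow> is_ring_hom \<phi> \<Longrightarrow> is_ring_hom (\<psi> \<circ> \<phi>)"
  by (simp add: is_ring_hom_def)

lemma map_Ga: "is_ring_hom \<psi> \<Longrightarrow> mps_map \<psi> Ga = Ga"
  by (simp add: Ga_def map_add map_var)

lemma dual_map_lift: "is_ring_hom \<psi> \<Longrightarrow> mps_map (dual_map \<psi>) (lift f) = lift (mps_map \<psi> f)"
  by (rule ext) (simp add: mps_map_def dual_map_def hom_0)

lemma dual_map_eps: "is_ring_hom \<psi> \<Longrightarrow> mps_map (dual_map \<psi>) (eps h) = eps (mps_map \<psi> h)"
  by (rule ext) (simp add: mps_map_def dual_map_def hom_0 eps_def)

context mainctx
begin

lemma natural:
  fixes \<psi> :: "'s \<Rightarrow> 't::comm_ring_1"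
  assumes h\<psi>: "is_ring_hom \<psi>" and C: "C \<in> carrier (cohom_Ga \<phi> F n)"
  shows "tangent_comparison (\<psi> \<circ> \<phi>) F G n (cohom_map \<psi> (mps_map (\<psi> \<circ> \<phi>) F) Ga n C)
       = cohom_map (dual_map \<psi>) (mps_map (dual_base (\<psi> \<circ> \<phi>)) F) (mps_map (dual_base (\<psi> \<circ> \<phi>)) G) n
            (tangent_comparison \<phi> F G n C)"
proof -
  interpret M: mainctx "\<psi> \<circ> \<phi>" F G by (rule mainctx.intro[OF hom_comp[OF h\<psi> h\<phi>] fF fG])
  interpret A: comm_group "AA n" by (rule grpA)
  interpret D: comm_group "AD n" by (rule grpD)
  interpret MA: comm_group "M.AA n" by (rule M.grpA)
  interpret MD: comm_group "M.AD n" by (rule M.grpD)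
  have MFs: "mps_map (\<psi> \<circ> \<phi>) F = mps_map \<psi> Fs" by (simp add: map_map)
  have MGs: "mps_map (\<psi> \<circ> \<phi>) G = mps_map \<psi> Gs" by (simp add: map_map)
  have hd: "is_ring_hom (dual_map \<psi>)" by (rule hom_dual_map[OF h\<psi>])
  obtain h where h: "h \<in> cocycles Fs Ga n" "C = BA n #>\<^bsub>AA n\<^esub> h" using C by (auto simp: HS_carrier)
  have hc: "h \<in> cochains n" using h(1) CA.cocycles_sub by blast
  have ph: "mps_map \<psi> h \<in> cocycles (mps_map (\<psi> \<circ> \<phi>) F) Ga n"
  proof -
    have "coboundary (mps_map (\<psi> \<circ> \<phi>) F) Ga n (mps_map \<psi> h) = mps_map \<psi> (coboundary Fs Ga n h)"
      using coboundary_map[OF fFs fgl_Ga h\<psi> hc] map_Ga[OF h\<psi>] MFs by simp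
    also have "\<dots> = mps_zero" using h(1) map_zero[OF h\<psi>] by (simp add: cocycles_def)
    finally show ?thesis using map_cochains[OF h\<psi> hc] by (simp add: cocycles_def)
  qed
  have L: "cohom_map \<psi> (mps_map (\<psi> \<circ> \<phi>) F) Ga n C = M.BA n #>\<^bsub>M.AA n\<^esub> mps_map \<psi> h"
  proof -
    define h' where "h' = (SOME x. x \<in> C)"
    have "h' \<in> BA n #>\<^bsub>AA n\<^esub> h" unfolding h'_def h(2) by (rule A.some_rcos[OF CA.cob_subgroup]) (simp add: carrier_cg hc)
    then obtain b where b: "b \<in> BA n" "h' = cadd Ga n b h" using rcosE mult_cg by metis
    have bc: "b \<in> cochains n" using b(1) CA.coboundaries_sub by blast
    have pb: "mps_map \<psi> b \<in> M.BA n"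
    proof (cases n)
      case 0 then show ?thesis using b(1) map_zero[OF h\<psi>] by (simp add: coboundaries_def)
    next
      case (Suc m)
      then obtain y where y: "y \<in> cochains m" "b = coboundary Fs Ga m y" using b(1) by (auto simp: coboundaries_def)
      have "mps_map \<psi> b = coboundary (mps_map (\<psi> \<circ> \<phi>) F) Ga m (mps_map \<psi> y)"
        using y coboundary_map[OF fFs fgl_Ga h\<psi> y(1)] map_Ga[OF h\<psi>] MFs by simp
      then show ?thesis using Suc map_cochains[OF h\<psi> y(1)] by (auto simp: coboundaries_def)
    qed
    have "mps_map \<psi> h' = cadd Ga n (mps_map \<psi> b) (mps_map \<psi> h)"
      using b(2) cadd_map[OF h\<psi>, of Ga n b h] map_Ga[OF h\<psi>] by simp
    then have e: "mps_map \<psi> h' = mps_map \<psi> b \<otimes>\<^bsub>M.AA n\<^esub> mps_map \<psi> h" by (simp add: mult_cg)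
    have "cohom_map \<psi> (mps_map (\<psi> \<circ> \<phi>) F) Ga n C = M.BA n #>\<^bsub>M.AA n\<^esub> mps_map \<psi> h'"
      unfolding cohom_map_def M.CA.cohom_class_eq h'_def by simp
    also have "\<dots> = M.BA n #>\<^bsub>M.AA n\<^esub> mps_map \<psi> h"
      unfolding e by (rule MA.rcos_absorb[OF M.CA.cob_subgroup pb]) (simp add: carrier_cg map_cochains[OF h\<psi> hc])
    finally show ?thesis .
  qed
  have R: "cohom_map (dual_map \<psi>) (mps_map (dual_base (\<psi> \<circ> \<phi>)) F) (mps_map (dual_base (\<psi> \<circ> \<phi>)) G) n
            (BD n #>\<^bsub>AD n\<^esub> eps h) = M.BD n #>\<^bsub>M.AD n\<^esub> eps (mps_map \<psi> h)"
  proof -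
    define x where "x = (SOME x. x \<in> BD n #>\<^bsub>AD n\<^esub> eps h)"
    have "x \<in> BD n #>\<^bsub>AD n\<^esub> eps h" unfolding x_def by (rule D.some_rcos[OF CD.cob_subgroup]) (simp add: carrier_cg eps_cochain hc)
    then obtain b where b: "b \<in> BD n" "x = cadd (lift Gs) n b (eps h)" using rcosE mult_cg by metis
    have LF: "mps_map (dual_map \<psi>) (lift Fs) = lift M.Fs" using dual_map_lift[OF h\<psi>] MFs by simp
    have LG: "mps_map (dual_map \<psi>) (lift Gs) = lift M.Gs" using dual_map_lift[OF h\<psi>] MGs by simp
    have pb: "mps_map (dual_map \<psi>) b \<in> M.BD n"
    proof (cases n)
      case 0 then show ?thesis using b(1) map_zero[OF hd] by (simp add: coboundaries_def)
    next
      case (Suc m)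
      then obtain y where y: "y \<in> cochains m" "b = coboundary (lift Fs) (lift Gs) m y" using b(1) by (auto simp: coboundaries_def)
      have "mps_map (dual_map \<psi>) b = coboundary (lift M.Fs) (lift M.Gs) m (mps_map (dual_map \<psi>) y)"
        using y coboundary_map[OF fFd fGd hd y(1)] LF LG by simp
      then show ?thesis using Suc map_cochains[OF hd y(1)] by (auto simp: coboundaries_def)
    qed
    have "mps_map (dual_map \<psi>) x = cadd (lift M.Gs) n (mps_map (dual_map \<psi>) b) (eps (mps_map \<psi> h))"
      using b(2) cadd_map[OF hd, of "lift Gs" n b "eps h"] LG dual_map_eps[OF h\<psi>] by simp
    then have e: "mps_map (dual_map \<psi>) x = mps_map (dual_map \<psi>) b \<otimes>\<^bsub>M.AD n\<^esub> eps (mps_map \<psi> h)" by (simp add: mult_cg)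
    have "cohom_map (dual_map \<psi>) (mps_map (dual_base (\<psi> \<circ> \<phi>)) F) (mps_map (dual_base (\<psi> \<circ> \<phi>)) G) n
            (BD n #>\<^bsub>AD n\<^esub> eps h) = M.BD n #>\<^bsub>M.AD n\<^esub> mps_map (dual_map \<psi>) x"
      unfolding cohom_map_def M.Fd_eq M.Gd_eq M.CD.cohom_class_eq x_def by simp
    also have "\<dots> = M.BD n #>\<^bsub>M.AD n\<^esub> eps (mps_map \<psi> h)"
      unfolding e by (rule MD.rcos_absorb[OF M.CD.cob_subgroup pb]) (simp add: carrier_cg eps_cochain map_cochains[OF h\<psi> hc])
    finally show ?thesis .
  qed
  have "tangent_comparison (\<psi> \<circ> \<phi>) F G n (cohom_map \<psi> (mps_map (\<psi> \<circ> \<phi>) F) Ga n C)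
      = tangent_comparison (\<psi> \<circ> \<phi>) F G n (M.BA n #>\<^bsub>M.AA n\<^esub> mps_map \<psi> h)" by (simp only: L)
  also have "\<dots> = M.BD n #>\<^bsub>M.AD n\<^esub> eps (mps_map \<psi> h)" by (rule M.tau_coset[OF ph])
  also have "\<dots> = cohom_map (dual_map \<psi>) (mps_map (dual_base (\<psi> \<circ> \<phi>)) F) (mps_map (dual_base (\<psi> \<circ> \<phi>)) G) n
            (BD n #>\<^bsub>AD n\<^esub> eps h)" by (rule R[symmetric])
  also have "\<dots> = cohom_map (dual_map \<psi>) (mps_map (dual_base (\<psi> \<circ> \<phi>)) F) (mps_map (dual_base (\<psi> \<circ> \<phi>)) G) n
            (tangent_comparison \<phi> F G n C)" by (simp only: h(2) tau_coset[OF h(1)])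
  finally show ?thesis .
qed

end



theorem mainTheorem3:
  fixes \<phi> :: "'r::comm_ring_1 \<Rightarrow> 's::comm_ring_1"
    and F G :: "'r mps"
    and n :: nat
  assumes "is_ring_hom \<phi>" and "fgl F" and "fgl G"
  shows "tangent_comparison \<phi> F G n \<in> iso (cohom_Ga \<phi> F n) (tangent_cohom \<phi> F G n)
    \<and> (\<forall>(\<phi>' :: 'r \<Rightarrow> 't::comm_ring_1) \<psi>. is_ring_hom \<phi>' \<longrightarrow> is_ring_hom \<psi> \<longrightarrow> \<psi> \<circ> \<phi> = \<phi>' \<longrightarrow>
         (\<forall>C \<in> carrier (cohom_Ga \<phi> F n).
            tangent_comparison \<phi>' F G n (cohom_map \<psi> (mps_map \<phi>' F) Ga n C)
            = cohom_map (dual_map \<psi>) (mps_map (dual_base \<phi>') F) (mps_map (dual_base \<phi>') G) n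
                (tangent_comparison \<phi> F G n C)))"
  proof -
  interpret M: mainctx \<phi> F G by (rule mainctx.intro[OF assms])
  show ?thesis
  proof (intro conjI allI impI ballI)
    show "tangent_comparison \<phi> F G n \<in> iso (cohom_Ga \<phi> F n) (tangent_cohom \<phi> F G n)"
      by (rule M.tau_iso)
  next
    fix \<phi>' :: "'r \<Rightarrow> 't::comm_ring_1" and \<psi> C
    assume h1: "is_ring_hom \<phi>'" and h2: "is_ring_hom \<psi>" and h3: "\<psi> \<circ> \<phi> = \<phi>'"
      and C: "C \<in> carrier (cohom_Ga \<phi> F n)"
    show "tangent_comparison \<phi>' F G n (cohom_map \<psi> (mps_map \<phi>' F) Ga n C)
            = cohom_map (dual_map \<psi>) (mps_map (dual_base \<phi>') F) (mps_map (dual_base \<phi>') G) n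
                (tangent_comparison \<phi> F G n C)"
      using M.natural[OF h2 C] h3 by simp
  qed
qed

end
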